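(* Let $n\ge5$ and let $\Gamma=R_{2n}(n+2,n+1)$. Relabel its vertices by $u_i,v_i,w_i,z_i$ ($i\in\mathbb Z_n$) as follows: $u_i=x_i$ for $0\le i\le n-2$, $u_{n-1}=y_{n-2}$; $v_i=y_{i-1}$ for $1\le i\le n-2$, $v_0=y_{2n-1}$, $v_{n-1}=x_{n-1}$; $w_i=y_{n+i-1}$ for $0\le i\le n-2$, $w_{n-1}=x_{2n-1}$; $z_i=x_{n+i}$ for $0\le i\le n-2$, $z_{n-1}=y_{2n-2}$. For $i\in\mathbb Z_n$ let $\sigma_i=(u_i,v_i)(w_i,z_i)(u_{i+1},w_{i+1})(v_{i+1},z_{i+1})$ (an automorphism of $\Gamma$), let $N=\langle\sigma_0,\ldots,\sigma_{n-1}\rangle$ and $B_i=\{u_i,v_i,w_i,z_i\}$. Each element $t\in N$ fixes every $B_i$ setwise and acts on $B_i$ as one of $1$, $(u_i,v_i)(w_i,z_i)$, $(u_i,w_i)(v_i,z_i)$, $(u_i,z_i)(v_i,w_i)$; write $t=(j_0,\ldots,j_{n-1})$ where $j_i\in\{0,1,2,3\}$ indicates which of these four actions (in this order) $t$ induces on $B_i$. Let $\mathcal M$ be a map of class $2_{\{0,1\}}$ with underlying graph $\Gamma$, and $T=N\cap\mathrm{Aut}(\mathcal M)$. Then either $T=\{(0,0,\ldots,0),(0,1,2,0,1,2,\ldots,0,1,2),(2,0,1,\ldots,2,0,1),(1,2,0,\ldots,1,2,0),(2,1,3,\ldots,2,1,3),(3,2,1,\ldots,3,2,1),(1,3,2,\ldots,1,3,2),(3,3,\ldots,3)\}$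 (each non-constant tuple being the periodic repetition of the displayed block of length $3$), in which case $3\mid n$; or $T=\{(0,0,\ldots,0),(0,1,3,2,\ldots,0,1,3,2),(2,0,1,3,\ldots,2,0,1,3),(3,2,0,1,\ldots,3,2,0,1),(1,3,2,0,\ldots,1,3,2,0),(2,1,2,1,\ldots,2,1),(1,2,1,2,\ldots,1,2),(3,3,\ldots,3)\}$ (periodic repetitions of the displayed blocks), in which case $4\mid n$. In particular, $\gcd(n,12)\ne1$.
   Context: For $m\ge3$, $1\le r\le m-1$ with $r\ne m/2$, and $0\le a\le m-1$, the Rose Window graph $R_m(a,r)$ has vertex set $\{x_i,y_i: i\in\mathbb Z_m\}$ and edges $x_ix_{i+1}$, $y_iy_{i+r}$, $x_iy_i$, $x_iy_{i-a}$ for $i\in\mathbb Z_m$ (indices mod $m$); here $m=2n$ and indices of $x,y$ are mod $2n$. A map is a $2$-cell embedding of a connected simple graph (its underlying graph) in a closed surface; the components of the complement are the faces. All maps considered are polytopal: flags correspond bijectively to incident triples (vertex, edge, face). For a flag $\Phi$ and $i\in\{0,1,2\}$, $\Phi^i$ is the unique flag differing from $\Phi$ exactly in its vertex ($i=0$), edge ($i=1$) or face ($i=2$). $\mathrm{Aut}(\mathcal M)$ is the group of automorphisms of the underlying graph preserving the set of faces. A map is in class $2_{\{0,1\}}$ if $\mathrm{Aut}(\mathcal M)$ has exactly two orbits on flags and for every flag $\Phi$, the flags $\Phi^0,\Phi^1$ lie in the orbit of $\Phi$ while $\Phi^2$ does not. *)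

theory Defs
  imports Main "HOL-Combinatorics.Transposition"
begin

text \<open>Vertices: x_i = (False, i), y_i = (True, i), 0 <= i < m. Edges are 2-element vertex sets.\<close>

definition rw_verts :: "nat \<Rightarrow> (bool \<times> nat) set" where
  "rw_verts m = {(b, i). i < m}"

definition rw_edges :: "nat \<Rightarrow> nat \<Rightarrow> nat \<Rightarrow> (bool \<times> nat) set set" where
  "rw_edges m a r =
     {{(False, i), (False, (i + 1) mod m)} | i. i < m}
   \<union> {{(True, i), (True, (i + r) mod m)} | i. i < m}
   \<union> {{(False, i), (True, i)} | i. i < m}
   \<union> {{(False, i), (True, (i + m - a) mod m)} | i. i < m}"

text \<open>A face of a polytopal map is a closed trail (no repeated edge) of the graph.
  It is encoded by its set of corners; a corner is the 2-set {e, e'} of consecutive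
  edges of the boundary walk (meeting at the vertex in the intersection of e and e').\<close>

definition is_corner :: "'v set set \<Rightarrow> 'v set set \<Rightarrow> bool" where
  "is_corner E c \<longleftrightarrow> (\<exists>e e'. c = {e, e'} \<and> e \<in> E \<and> e' \<in> E \<and> e \<noteq> e' \<and> e \<inter> e' \<noteq> {})"

definition face_edges :: "'v set set set \<Rightarrow> 'v set set" where
  "face_edges f = \<Union> f"

definition is_face :: "'v set set \<Rightarrow> 'v set set set \<Rightarrow> bool" where
  "is_face E f \<longleftrightarrow> f \<noteq> {} \<and> finite f \<and> (\<forall>c\<in>f. is_corner E c)
     \<and> (\<forall>e\<in>face_edges f. \<forall>v\<in>e. card {c\<in>f. e \<in> c \<and> v \<in> \<Inter> c} = 1)
     \<and> (\<forall>c\<in>f. \<forall>d\<in>f. (c, d) \<in> {(c1, c2). c1 \<in> f \<and> c2 \<in> f \<and> c1 \<inter> c2 \<noteq> {}}\<^sup>*)"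

text \<open>A map with underlying graph (V,E): a set of faces such that every edge lies in
  exactly two faces and around every vertex the faces form a single cycle
  (the vertex link is connected), on a connected graph.\<close>

definition graph_connected :: "'v set \<Rightarrow> 'v set set \<Rightarrow> bool" where
  "graph_connected V E \<longleftrightarrow>
     (\<forall>x\<in>V. \<forall>y\<in>V. (x, y) \<in> {(a, b). {a, b} \<in> E}\<^sup>*)"

definition vertex_link :: "'v set set set set \<Rightarrow> 'v \<Rightarrow> ('v set \<times> 'v set) set" where
  "vertex_link F v = {(e, e'). \<exists>f\<in>F. {e, e'} \<in> f \<and> e \<noteq> e' \<and> v \<in> e \<and> v \<in> e'}"

definition is_map :: "'v set \<Rightarrow> 'v set set \<Rightarrow> 'v set set set set \<Rightarrow> bool" where
  "is_map V E F \<longleftrightarrow> finite V \<and> (\<forall>e\<in>E. \<exists>x y. e = {x, y} \<and> x \<noteq> y \<and> x \<in> V \<and> y \<in> V)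
     \<and> graph_connected V E
     \<and> (\<forall>f\<in>F. is_face E f)
     \<and> (\<forall>e\<in>E. card {f\<in>F. e \<in> face_edges f} = 2)
     \<and> (\<forall>v\<in>V. \<forall>e\<in>E. \<forall>e'\<in>E. v \<in> e \<longrightarrow> v \<in> e' \<longrightarrow> (e, e') \<in> (vertex_link F v)\<^sup>*)"

type_synonym 'v flag = "'v \<times> 'v set \<times> 'v set set set"

definition flags :: "'v set set set set \<Rightarrow> 'v flag set" where
  "flags F = {(v, e, f). f \<in> F \<and> e \<in> face_edges f \<and> v \<in> e}"

definition flag0 :: "'v flag \<Rightarrow> 'v flag" where
  "flag0 \<Phi> = (case \<Phi> of (v, e, f) \<Rightarrow> (THE w. w \<in> e \<and> w \<noteq> v, e, f))"

definition flag1 :: "'v flag \<Rightarrow> 'v flag" where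
  "flag1 \<Phi> = (case \<Phi> of (v, e, f) \<Rightarrow> (v, THE e'. {e, e'} \<in> f \<and> e' \<noteq> e \<and> v \<in> e', f))"

definition flag2 :: "'v set set set set \<Rightarrow> 'v flag \<Rightarrow> 'v flag" where
  "flag2 F \<Phi> = (case \<Phi> of (v, e, f) \<Rightarrow> (v, e, THE f'. f' \<in> F \<and> e \<in> face_edges f' \<and> f' \<noteq> f))"

definition img_edge :: "('v \<Rightarrow> 'v) \<Rightarrow> 'v set \<Rightarrow> 'v set" where
  "img_edge g e = g ` e"

definition img_face :: "('v \<Rightarrow> 'v) \<Rightarrow> 'v set set set \<Rightarrow> 'v set set set" where
  "img_face g f = (\<lambda>c. img_edge g ` c) ` f"

text \<open>Aut(M): automorphisms of the underlying graph preserving the set of faces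
  (permutations of V, normalised to be the identity outside V).\<close>

definition map_aut :: "'v set \<Rightarrow> 'v set set \<Rightarrow> 'v set set set set \<Rightarrow> ('v \<Rightarrow> 'v) set" where
  "map_aut V E F = {g. bij_betw g V V \<and> (\<forall>x. x \<notin> V \<longrightarrow> g x = x)
      \<and> img_edge g ` E = E \<and> img_face g ` F = F}"

definition flag_act :: "('v \<Rightarrow> 'v) \<Rightarrow> 'v flag \<Rightarrow> 'v flag" where
  "flag_act g \<Phi> = (case \<Phi> of (v, e, f) \<Rightarrow> (g v, img_edge g e, img_face g f))"

definition flag_orbit :: "'v set \<Rightarrow> 'v set set \<Rightarrow> 'v set set set set \<Rightarrow> 'v flag \<Rightarrow> 'v flag set" where
  "flag_orbit V E F \<Phi> = (\<lambda>g. flag_act g \<Phi>) ` map_aut V E F"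

definition class_2_01 :: "'v set \<Rightarrow> 'v set set \<Rightarrow> 'v set set set set \<Rightarrow> bool" where
  "class_2_01 V E F \<longleftrightarrow> is_map V E F
     \<and> card (flag_orbit V E F ` flags F) = 2
     \<and> (\<forall>\<Phi>\<in>flags F. flag0 \<Phi> \<in> flag_orbit V E F \<Phi> \<and> flag1 \<Phi> \<in> flag_orbit V E F \<Phi>
                      \<and> flag2 F \<Phi> \<notin> flag_orbit V E F \<Phi>)"

definition xv :: "nat \<Rightarrow> bool \<times> nat" where "xv i = (False, i)"
definition yv :: "nat \<Rightarrow> bool \<times> nat" where "yv i = (True, i)"

definition U :: "nat \<Rightarrow> nat \<Rightarrow> bool \<times> nat" where
  "U n i = (if i \<le> n - 2 then xv i else yv (n - 2))"
definition Vv :: "nat \<Rightarrow> nat \<Rightarrow> bool \<times> nat" where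
  "Vv n i = (if i = 0 then yv (2 * n - 1) else if i \<le> n - 2 then yv (i - 1) else xv (n - 1))"
definition W :: "nat \<Rightarrow> nat \<Rightarrow> bool \<times> nat" where
  "W n i = (if i \<le> n - 2 then yv (n + i - 1) else xv (2 * n - 1))"
definition Z :: "nat \<Rightarrow> nat \<Rightarrow> bool \<times> nat" where
  "Z n i = (if i \<le> n - 2 then xv (n + i) else yv (2 * n - 2))"

definition blk :: "nat \<Rightarrow> nat \<Rightarrow> (bool \<times> nat) set" where
  "blk n i = {U n i, Vv n i, W n i, Z n i}"

definition sigma :: "nat \<Rightarrow> nat \<Rightarrow> (bool \<times> nat) \<Rightarrow> (bool \<times> nat)" where
  "sigma n i = transpose (U n i) (Vv n i) \<circ> transpose (W n i) (Z n i)
      \<circ> transpose (U n ((i + 1) mod n)) (W n ((i + 1) mod n))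
      \<circ> transpose (Vv n ((i + 1) mod n)) (Z n ((i + 1) mod n))"

text \<open>N = <sigma_0,...,sigma_{n-1}>; since the generators are involutions of a finite
  set, the generated group is the closure of the identity under left multiplication
  by generators.\<close>
inductive_set Ngrp :: "nat \<Rightarrow> ((bool \<times> nat) \<Rightarrow> (bool \<times> nat)) set" for n where
  Ngrp_id: "id \<in> Ngrp n"
| Ngrp_step: "t \<in> Ngrp n \<Longrightarrow> i < n \<Longrightarrow> sigma n i \<circ> t \<in> Ngrp n"

definition blk_act :: "nat \<Rightarrow> nat \<Rightarrow> nat \<Rightarrow> (bool \<times> nat) \<Rightarrow> (bool \<times> nat)" where
  "blk_act n i k =
    (if k = 1 then transpose (U n i) (Vv n i) \<circ> transpose (W n i) (Z n i)
     else if k = 2 then transpose (U n i) (W n i) \<circ> transpose (Vv n i) (Z n i)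
     else if k = 3 then transpose (U n i) (Z n i) \<circ> transpose (Vv n i) (W n i)
     else id)"

definition elt :: "nat \<Rightarrow> (nat \<Rightarrow> nat) \<Rightarrow> (bool \<times> nat) \<Rightarrow> (bool \<times> nat)" where
  "elt n j = foldr (\<circ>) (map (\<lambda>i. blk_act n i (j i)) [0..<n]) id"

definition per :: "nat list \<Rightarrow> nat \<Rightarrow> nat" where
  "per bs i = bs ! (i mod length bs)"

definition T3 :: "(nat \<Rightarrow> nat) set" where
  "T3 = {per [0], per [0,1,2], per [2,0,1], per [1,2,0], per [2,1,3], per [3,2,1],
         per [1,3,2], per [3]}"

definition T4 :: "(nat \<Rightarrow> nat) set" where
  "T4 = {per [0], per [0,1,3,2], per [2,0,1,3], per [3,2,0,1], per [1,3,2,0], per [2,1],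
         per [1,2], per [3]}"

end

theory Submission
  imports Defs
begin


locale RW =
  fixes n :: nat
  assumes n5: "n \<ge> 5"
begin

abbreviation "VV \<equiv> rw_verts (2*n)"
abbreviation "EE \<equiv> rw_edges (2*n) (n+2) (n+1)"

definition bk :: "bool \<times> nat \<Rightarrow> nat" where
 "bk x = (case x of (False,i) \<Rightarrow> (if i \<le> n-2 then i else if i = n-1 then n-1 else if i \<le> 2*n-2 then i-n else n-1)
   | (True,i) \<Rightarrow> (if i \<le> n-3 then i+1 else if i = n-2 then n-1 else if i \<le> 2*n-3 then i+1-n else if i = 2*n-2 then n-1 else 0))"
definition la :: "bool \<times> nat \<Rightarrow> bool" where
 "la x = (case x of (False,i) \<Rightarrow> (if i \<le> n-2 then False else if i = n-1 then True else if i \<le> 2*n-2 then True else False)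
   | (True,i) \<Rightarrow> (if i \<le> n-3 then True else if i = n-2 then False else if i \<le> 2*n-3 then False else True))"
definition lb :: "bool \<times> nat \<Rightarrow> bool" where
 "lb x = (case x of (False,i) \<Rightarrow> (if i \<le> n-2 then False else if i = n-1 then False else True)
   | (True,i) \<Rightarrow> (if i \<le> n-2 then False else if i \<le> 2*n-2 then True else False))"
definition lab :: "nat \<Rightarrow> bool \<Rightarrow> bool \<Rightarrow> bool \<times> nat" where
 "lab k a b = (if a then (if b then Z n k else Vv n k) else (if b then W n k else U n k))"

lemma n_eq: obtains m where "n = m + 5"
  using n5 by (metis add.commute le_Suc_ex)

lemma lab_in: assumes "k < n" shows "lab k a b \<in> VV"
  proof -
  obtain mm where mm: "n = mm + 5" by (rule n_eq)
  show ?thesis using assms unfolding lab_def rw_verts_def U_def Vv_def W_def Z_def xv_def yv_def by (cases a; cases b; auto simp: mm)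
qed
lemma bk_lab: assumes "k < n" shows "bk (lab k a b) = k"
  proof -
  obtain mm where mm: "n = mm + 5" by (rule n_eq)
  show ?thesis using assms unfolding lab_def bk_def U_def Vv_def W_def Z_def xv_def yv_def by (cases a; cases b; auto simp: mm)
qed
lemma la_lab: assumes "k < n" shows "la (lab k a b) = a"
  proof -
  obtain mm where mm: "n = mm + 5" by (rule n_eq)
  show ?thesis using assms unfolding lab_def la_def U_def Vv_def W_def Z_def xv_def yv_def by (cases a; cases b; auto simp: mm)
qed
lemma lb_lab: assumes "k < n" shows "lb (lab k a b) = b"
  proof -
  obtain mm where mm: "n = mm + 5" by (rule n_eq)
  show ?thesis using assms unfolding lab_def lb_def U_def Vv_def W_def Z_def xv_def yv_def by (cases a; cases b; auto simp: mm)
qed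
lemma bk_lt: assumes "x \<in> VV" shows "bk x < n"
  proof -
  obtain mm where mm: "n = mm + 5" by (rule n_eq)
  show ?thesis using assms unfolding rw_verts_def bk_def  by (auto simp: mm split: bool.splits)
qed
lemma lab_coords: assumes "x \<in> VV" shows "lab (bk x) (la x) (lb x) = x"
proof -
  obtain mm where mm: "n = mm + 5" by (rule n_eq)
  obtain t i where x: "x = (t,i)" and i: "i < 2*n" using assms by (auto simp: rw_verts_def)
  note defs = bk_def la_def lb_def lab_def U_def Vv_def W_def Z_def xv_def yv_def
  show ?thesis
  proof (cases t)
    case False
    then have xx: "x = (False, i)" using x by simp
    have "i \<le> n-2 \<or> i = n-1 \<or> (n \<le> i \<and> i \<le> 2*n-2) \<or> i = 2*n-1" using i by linarith
    then show ?thesis using i unfolding xx defs by (elim disjE) (auto simp: mm)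
  next
    case True
    then have xx: "x = (True, i)" using x by simp
    have "i \<le> n-3 \<or> i = n-2 \<or> (n-1 \<le> i \<and> i \<le> 2*n-3) \<or> i = 2*n-2 \<or> i = 2*n-1" using i by linarith
    then show ?thesis using i unfolding xx defs by (elim disjE) (auto simp: mm)
  qed
qed

lemma mod2: "(b::nat) \<le> a \<Longrightarrow> a < 2*b \<Longrightarrow> a mod b = a - b"
  by (simp add: le_mod_geq)

definition nx :: "nat \<Rightarrow> nat" where "nx k = Suc k mod n"

lemma f1a: "i < 2*n \<Longrightarrow> p = (False,i) \<Longrightarrow> q = (False,(i+1) mod (2*n)) \<Longrightarrow> {p,q} \<in> EE"
  unfolding rw_edges_def by blast
lemma f2a: "i < 2*n \<Longrightarrow> p = (True,i) \<Longrightarrow> q = (True,(i+(n+1)) mod (2*n)) \<Longrightarrow> {p,q} \<in> EE"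
  unfolding rw_edges_def by blast
lemma f3a: "i < 2*n \<Longrightarrow> p = (False,i) \<Longrightarrow> q = (True,i) \<Longrightarrow> {p,q} \<in> EE"
  unfolding rw_edges_def by blast
lemma f4a: "i < 2*n \<Longrightarrow> p = (False,i) \<Longrightarrow> q = (True,(i + 2*n - (n+2)) mod (2*n)) \<Longrightarrow> {p,q} \<in> EE"
  unfolding rw_edges_def by blast
lemma f1b: "i < 2*n \<Longrightarrow> p = (False,i) \<Longrightarrow> q = (False,(i+1) mod (2*n)) \<Longrightarrow> {q,p} \<in> EE"
  using f1a by (simp add: insert_commute)
lemma f2b: "i < 2*n \<Longrightarrow> p = (True,i) \<Longrightarrow> q = (True,(i+(n+1)) mod (2*n)) \<Longrightarrow> {q,p} \<in> EE"
  using f2a by (simp add: insert_commute)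
lemma f3b: "i < 2*n \<Longrightarrow> p = (False,i) \<Longrightarrow> q = (True,i) \<Longrightarrow> {q,p} \<in> EE"
  using f3a by (simp add: insert_commute)
lemma f4b: "i < 2*n \<Longrightarrow> p = (False,i) \<Longrightarrow> q = (True,(i + 2*n - (n+2)) mod (2*n)) \<Longrightarrow> {q,p} \<in> EE"
  using f4a by (simp add: insert_commute)

lemma e_000: assumes k: "k < n" shows "{lab k False False, lab (nx k) False False} \<in> EE"
proof -
  obtain mm where mm: "n = mm + 5" by (rule n_eq)
  have "k = 0 \<or> (1 \<le> k \<and> k \<le> n-3) \<or> k = n-2 \<or> k = n-1" using k by linarith
  then consider (z) "k=0" | (g) "1 \<le> k \<and> k \<le> n-3" | (p) "k = n-2" | (l) "k = n-1" by blast
  then show ?thesis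
  proof cases
    case z have nk: "nx k = 1" using z n5 unfolding nx_def by auto
    show ?thesis by (rule f1a[where i="k"]) (insert z, unfold nk lab_def U_def Vv_def W_def Z_def xv_def yv_def, auto simp: mm mod2)
  next
    case g have nk: "nx k = k+1" using g n5 unfolding nx_def by auto
    show ?thesis by (rule f1a[where i="k"]) (insert g, unfold nk lab_def U_def Vv_def W_def Z_def xv_def yv_def, auto simp: mm mod2)
  next
    case p have nk: "nx k = n-1" using p n5 unfolding nx_def by auto
    show ?thesis by (rule f3a[where i="n-2"]) (insert p, unfold nk lab_def U_def Vv_def W_def Z_def xv_def yv_def, auto simp: mm mod2)
  next
    case l have nk: "nx k = 0" using l n5 unfolding nx_def by auto
    show ?thesis by (rule f4b[where i="0"]) (insert l, unfold nk lab_def U_def Vv_def W_def Z_def xv_def yv_def, auto simp: mm mod2)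
  qed
qed

lemma e_010: assumes k: "k < n" shows "{lab k False False, lab (nx k) True False} \<in> EE"
proof -
  obtain mm where mm: "n = mm + 5" by (rule n_eq)
  have "k = 0 \<or> (1 \<le> k \<and> k \<le> n-3) \<or> k = n-2 \<or> k = n-1" using k by linarith
  then consider (z) "k=0" | (g) "1 \<le> k \<and> k \<le> n-3" | (p) "k = n-2" | (l) "k = n-1" by blast
  then show ?thesis
  proof cases
    case z have nk: "nx k = 1" using z n5 unfolding nx_def by auto
    show ?thesis by (rule f3a[where i="k"]) (insert z, unfold nk lab_def U_def Vv_def W_def Z_def xv_def yv_def, auto simp: mm mod2)
  next
    case g have nk: "nx k = k+1" using g n5 unfolding nx_def by auto
    show ?thesis by (rule f3a[where i="k"]) (insert g, unfold nk lab_def U_def Vv_def W_def Z_def xv_def yv_def, auto simp: mm mod2)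
  next
    case p have nk: "nx k = n-1" using p n5 unfolding nx_def by auto
    show ?thesis by (rule f1a[where i="n-2"]) (insert p, unfold nk lab_def U_def Vv_def W_def Z_def xv_def yv_def, auto simp: mm mod2)
  next
    case l have nk: "nx k = 0" using l n5 unfolding nx_def by auto
    show ?thesis by (rule f2a[where i="n-2"]) (insert l, unfold nk lab_def U_def Vv_def W_def Z_def xv_def yv_def, auto simp: mm mod2)
  qed
qed

lemma e_001: assumes k: "k < n" shows "{lab k False True, lab (nx k) False False} \<in> EE"
proof -
  obtain mm where mm: "n = mm + 5" by (rule n_eq)
  have "k = 0 \<or> (1 \<le> k \<and> k \<le> n-3) \<or> k = n-2 \<or> k = n-1" using k by linarith
  then consider (z) "k=0" | (g) "1 \<le> k \<and> k \<le> n-3" | (p) "k = n-2" | (l) "k = n-1" by blast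
  then show ?thesis
  proof cases
    case z have nk: "nx k = 1" using z n5 unfolding nx_def by auto
    show ?thesis by (rule f4b[where i="k+1"]) (insert z, unfold nk lab_def U_def Vv_def W_def Z_def xv_def yv_def, auto simp: mm mod2)
  next
    case g have nk: "nx k = k+1" using g n5 unfolding nx_def by auto
    show ?thesis by (rule f4b[where i="k+1"]) (insert g, unfold nk lab_def U_def Vv_def W_def Z_def xv_def yv_def, auto simp: mm mod2)
  next
    case p have nk: "nx k = n-1" using p n5 unfolding nx_def by auto
    show ?thesis by (rule f2a[where i="2*n-3"]) (insert p, unfold nk lab_def U_def Vv_def W_def Z_def xv_def yv_def, auto simp: mm mod2)
  next
    case l have nk: "nx k = 0" using l n5 unfolding nx_def by auto
    show ?thesis by (rule f1a[where i="2*n-1"]) (insert l, unfold nk lab_def U_def Vv_def W_def Z_def xv_def yv_def, auto simp: mm mod2)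
  qed
qed

lemma e_011: assumes k: "k < n" shows "{lab k False True, lab (nx k) True False} \<in> EE"
proof -
  obtain mm where mm: "n = mm + 5" by (rule n_eq)
  have "k = 0 \<or> (1 \<le> k \<and> k \<le> n-3) \<or> k = n-2 \<or> k = n-1" using k by linarith
  then consider (z) "k=0" | (g) "1 \<le> k \<and> k \<le> n-3" | (p) "k = n-2" | (l) "k = n-1" by blast
  then show ?thesis
  proof cases
    case z have nk: "nx k = 1" using z n5 unfolding nx_def by auto
    show ?thesis by (rule f2a[where i="n+k-1"]) (insert z, unfold nk lab_def U_def Vv_def W_def Z_def xv_def yv_def, auto simp: mm mod2)
  next
    case g have nk: "nx k = k+1" using g n5 unfolding nx_def by auto
    show ?thesis by (rule f2a[where i="n+k-1"]) (insert g, unfold nk lab_def U_def Vv_def W_def Z_def xv_def yv_def, auto simp: mm mod2)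
  next
    case p have nk: "nx k = n-1" using p n5 unfolding nx_def by auto
    show ?thesis by (rule f4b[where i="n-1"]) (insert p, unfold nk lab_def U_def Vv_def W_def Z_def xv_def yv_def, auto simp: mm mod2)
  next
    case l have nk: "nx k = 0" using l n5 unfolding nx_def by auto
    show ?thesis by (rule f3a[where i="2*n-1"]) (insert l, unfold nk lab_def U_def Vv_def W_def Z_def xv_def yv_def, auto simp: mm mod2)
  qed
qed

lemma e_100: assumes k: "k < n" shows "{lab k True False, lab (nx k) False True} \<in> EE"
proof -
  obtain mm where mm: "n = mm + 5" by (rule n_eq)
  have "k = 0 \<or> (1 \<le> k \<and> k \<le> n-3) \<or> k = n-2 \<or> k = n-1" using k by linarith
  then consider (z) "k=0" | (g) "1 \<le> k \<and> k \<le> n-3" | (p) "k = n-2" | (l) "k = n-1" by blast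
  then show ?thesis
  proof cases
    case z have nk: "nx k = 1" using z n5 unfolding nx_def by auto
    show ?thesis by (rule f2a[where i="2*n-1"]) (insert z, unfold nk lab_def U_def Vv_def W_def Z_def xv_def yv_def, auto simp: mm mod2)
  next
    case g have nk: "nx k = k+1" using g n5 unfolding nx_def by auto
    show ?thesis by (rule f2a[where i="k-1"]) (insert g, unfold nk lab_def U_def Vv_def W_def Z_def xv_def yv_def, auto simp: mm mod2)
  next
    case p have nk: "nx k = n-1" using p n5 unfolding nx_def by auto
    show ?thesis by (rule f4b[where i="2*n-1"]) (insert p, unfold nk lab_def U_def Vv_def W_def Z_def xv_def yv_def, auto simp: mm mod2)
  next
    case l have nk: "nx k = 0" using l n5 unfolding nx_def by auto
    show ?thesis by (rule f3a[where i="n-1"]) (insert l, unfold nk lab_def U_def Vv_def W_def Z_def xv_def yv_def, auto simp: mm mod2)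
  qed
qed

lemma e_110: assumes k: "k < n" shows "{lab k True False, lab (nx k) True True} \<in> EE"
proof -
  obtain mm where mm: "n = mm + 5" by (rule n_eq)
  have "k = 0 \<or> (1 \<le> k \<and> k \<le> n-3) \<or> k = n-2 \<or> k = n-1" using k by linarith
  then consider (z) "k=0" | (g) "1 \<le> k \<and> k \<le> n-3" | (p) "k = n-2" | (l) "k = n-1" by blast
  then show ?thesis
  proof cases
    case z have nk: "nx k = 1" using z n5 unfolding nx_def by auto
    show ?thesis by (rule f4b[where i="n+k+1"]) (insert z, unfold nk lab_def U_def Vv_def W_def Z_def xv_def yv_def, auto simp: mm mod2)
  next
    case g have nk: "nx k = k+1" using g n5 unfolding nx_def by auto
    show ?thesis by (rule f4b[where i="n+k+1"]) (insert g, unfold nk lab_def U_def Vv_def W_def Z_def xv_def yv_def, auto simp: mm mod2)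
  next
    case p have nk: "nx k = n-1" using p n5 unfolding nx_def by auto
    show ?thesis by (rule f2a[where i="n-3"]) (insert p, unfold nk lab_def U_def Vv_def W_def Z_def xv_def yv_def, auto simp: mm mod2)
  next
    case l have nk: "nx k = 0" using l n5 unfolding nx_def by auto
    show ?thesis by (rule f1a[where i="n-1"]) (insert l, unfold nk lab_def U_def Vv_def W_def Z_def xv_def yv_def, auto simp: mm mod2)
  qed
qed

lemma e_101: assumes k: "k < n" shows "{lab k True True, lab (nx k) False True} \<in> EE"
proof -
  obtain mm where mm: "n = mm + 5" by (rule n_eq)
  have "k = 0 \<or> (1 \<le> k \<and> k \<le> n-3) \<or> k = n-2 \<or> k = n-1" using k by linarith
  then consider (z) "k=0" | (g) "1 \<le> k \<and> k \<le> n-3" | (p) "k = n-2" | (l) "k = n-1" by blast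
  then show ?thesis
  proof cases
    case z have nk: "nx k = 1" using z n5 unfolding nx_def by auto
    show ?thesis by (rule f3a[where i="n+k"]) (insert z, unfold nk lab_def U_def Vv_def W_def Z_def xv_def yv_def, auto simp: mm mod2)
  next
    case g have nk: "nx k = k+1" using g n5 unfolding nx_def by auto
    show ?thesis by (rule f3a[where i="n+k"]) (insert g, unfold nk lab_def U_def Vv_def W_def Z_def xv_def yv_def, auto simp: mm mod2)
  next
    case p have nk: "nx k = n-1" using p n5 unfolding nx_def by auto
    show ?thesis by (rule f1a[where i="2*n-2"]) (insert p, unfold nk lab_def U_def Vv_def W_def Z_def xv_def yv_def, auto simp: mm mod2)
  next
    case l have nk: "nx k = 0" using l n5 unfolding nx_def by auto
    show ?thesis by (rule f2a[where i="2*n-2"]) (insert l, unfold nk lab_def U_def Vv_def W_def Z_def xv_def yv_def, auto simp: mm mod2)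
  qed
qed

lemma e_111: assumes k: "k < n" shows "{lab k True True, lab (nx k) True True} \<in> EE"
proof -
  obtain mm where mm: "n = mm + 5" by (rule n_eq)
  have "k = 0 \<or> (1 \<le> k \<and> k \<le> n-3) \<or> k = n-2 \<or> k = n-1" using k by linarith
  then consider (z) "k=0" | (g) "1 \<le> k \<and> k \<le> n-3" | (p) "k = n-2" | (l) "k = n-1" by blast
  then show ?thesis
  proof cases
    case z have nk: "nx k = 1" using z n5 unfolding nx_def by auto
    show ?thesis by (rule f1a[where i="n+k"]) (insert z, unfold nk lab_def U_def Vv_def W_def Z_def xv_def yv_def, auto simp: mm mod2)
  next
    case g have nk: "nx k = k+1" using g n5 unfolding nx_def by auto
    show ?thesis by (rule f1a[where i="n+k"]) (insert g, unfold nk lab_def U_def Vv_def W_def Z_def xv_def yv_def, auto simp: mm mod2)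
  next
    case p have nk: "nx k = n-1" using p n5 unfolding nx_def by auto
    show ?thesis by (rule f3a[where i="2*n-2"]) (insert p, unfold nk lab_def U_def Vv_def W_def Z_def xv_def yv_def, auto simp: mm mod2)
  next
    case l have nk: "nx k = 0" using l n5 unfolding nx_def by auto
    show ?thesis by (rule f4b[where i="n"]) (insert l, unfold nk lab_def U_def Vv_def W_def Z_def xv_def yv_def, auto simp: mm mod2)
  qed
qed

lemma edge_lab: assumes "k < n" shows "{lab k a b, lab (nx k) a' a} \<in> EE"
  using assms e_000 e_010 e_001 e_011 e_100 e_110 e_101 e_111 by (cases a; cases a'; cases b) auto

definition fw :: "bool \<times> nat \<Rightarrow> bool \<times> nat \<Rightarrow> bool" where
  "fw x y \<longleftrightarrow> bk y = nx (bk x) \<and> lb y = la x"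

lemma isplit:
  assumes "i < 2*n"
  obtains "i = 0" | "i = 1" | "2 \<le> i \<and> i \<le> n-4" | "i = n-3" | "i = n-2" | "i = n-1" | "i = n"
    | "i = n+1" | "n+2 \<le> i \<and> i \<le> 2*n-4" | "i = 2*n-3" | "i = 2*n-2" | "i = 2*n-1"
proof -
  consider "i \<le> n-4" | "n-4 < i \<and> i \<le> n+1" | "n+1 < i" by linarith
  then show ?thesis
  proof cases
    case 1 then have "i = 0 \<or> i = 1 \<or> (2 \<le> i \<and> i \<le> n-4)" by linarith
    then show ?thesis using that by blast
  next
    case 2 then have "i = n-3 \<or> i = n-2 \<or> i = n-1 \<or> i = n \<or> i = n+1" using n5 by linarith
    then show ?thesis using that by blast
  next
    case 3 then have "(n+2 \<le> i \<and> i \<le> 2*n-4) \<or> i = 2*n-3 \<or> i = 2*n-2 \<or> i = 2*n-1" using assms n5 by linarith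
    then show ?thesis using that by blast
  qed
qed

lemma fam_fw:
  assumes i: "i < 2*n"
  shows "fw (False,i) (False,(i+1) mod (2*n)) \<or> fw (False,(i+1) mod (2*n)) (False,i)"
    and "fw (True,i) (True,(i+(n+1)) mod (2*n)) \<or> fw (True,(i+(n+1)) mod (2*n)) (True,i)"
    and "fw (False,i) (True,i) \<or> fw (True,i) (False,i)"
    and "fw (False,i) (True,(i + 2*n - (n+2)) mod (2*n)) \<or> fw (True,(i + 2*n - (n+2)) mod (2*n)) (False,i)"
proof -
  obtain mm where mm: "n = mm + 5" by (rule n_eq)
  note defs = fw_def bk_def la_def lb_def nx_def
  show "fw (False,i) (False,(i+1) mod (2*n)) \<or> fw (False,(i+1) mod (2*n)) (False,i)"
    using i by (rule isplit) (unfold defs, auto simp: mm mod2)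
  show "fw (True,i) (True,(i+(n+1)) mod (2*n)) \<or> fw (True,(i+(n+1)) mod (2*n)) (True,i)"
    using i by (rule isplit) (unfold defs, auto simp: mm mod2)
  show "fw (False,i) (True,i) \<or> fw (True,i) (False,i)"
    using i by (rule isplit) (unfold defs, auto simp: mm mod2)
  show "fw (False,i) (True,(i + 2*n - (n+2)) mod (2*n)) \<or> fw (True,(i + 2*n - (n+2)) mod (2*n)) (False,i)"
    using i by (rule isplit) (unfold defs, auto simp: mm mod2)
qed

definition pv :: "nat \<Rightarrow> nat" where "pv k = (k + n - 1) mod n"

lemma nx_lt[simp]: "nx k < n" using n5 unfolding nx_def by simp
lemma pv_lt[simp]: "pv k < n" using n5 unfolding pv_def by simp
lemma nx_pv[simp]: "k < n \<Longrightarrow> nx (pv k) = k"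
  using n5 unfolding nx_def pv_def by (cases "k = 0") (auto simp: mod_Suc le_mod_geq)
lemma pv_nx[simp]: "k < n \<Longrightarrow> pv (nx k) = k"
  using n5 unfolding nx_def pv_def by (cases "Suc k = n") (auto simp: mod_Suc le_mod_geq)
lemma nx_inj: "k < n \<Longrightarrow> j < n \<Longrightarrow> nx k = nx j \<Longrightarrow> k = j"
  by (metis pv_nx)
lemma pv_inj: "k < n \<Longrightarrow> j < n \<Longrightarrow> pv k = pv j \<Longrightarrow> k = j"
  by (metis nx_pv)
lemma nx_eq_iff: "k < n \<Longrightarrow> j < n \<Longrightarrow> nx j = k \<longleftrightarrow> j = pv k"
  by auto
lemma nx_simp: "k + 1 < n \<Longrightarrow> nx k = k + 1" unfolding nx_def by simp
lemma nx_last: "nx (n - 1) = 0" using n5 unfolding nx_def by simp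
lemma nx_neq: "k < n \<Longrightarrow> nx k \<noteq> k"
  using n5 unfolding nx_def by (cases "Suc k = n") auto
lemma nx_neq_pv: "k < n \<Longrightarrow> nx k \<noteq> pv k"
  using n5 unfolding nx_def pv_def by (cases "Suc k = n"; cases "k = 0") (auto simp: le_mod_geq)
lemma nx2_neq: "k < n \<Longrightarrow> nx (nx k) \<noteq> k"
  by (metis nx_lt nx_neq_pv pv_nx)
lemma nx_int: "int (nx j) mod int n = (int j + 1) mod int n"
  unfolding nx_def by (simp add: zmod_int of_nat_mod add.commute)
lemma pv_int: "int (pv j) mod int n = (int j - 1) mod int n"
proof -
  have "int (pv j) = (int j - 1 + int n) mod int n" unfolding pv_def using n5 by (simp add: zmod_int of_nat_diff algebra_simps)
  then show ?thesis by simp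
qed
lemma nx2_neq_pv: "k < n \<Longrightarrow> nx (nx k) \<noteq> pv k"
proof
  assume k: "k < n" and h: "nx (nx k) = pv k"
  have a: "\<And>j. j < n \<Longrightarrow> int (nx j) mod int n = (int j + 1) mod int n" by (rule nx_int)
  have b: "int (pv k) mod int n = (int k - 1) mod int n" by (rule pv_int)
  have "(int k + 2) mod int n = (int k - 1) mod int n"
    using a[of "nx k"] a[OF k] b h by (simp add: mod_simps add.assoc)
  hence "int n dvd 3" by (metis (no_types) add_diff_cancel_left' diff_diff_eq2 mod_eq_dvd_iff
        numeral_Bit1 numeral_One one_add_one uminus_add_conv_diff)
  thus False using n5 zdvd_imp_le[of "int n"] by fastforce
qed
lemma nx2_neq_pv2: "k < n \<Longrightarrow> nx (nx k) \<noteq> pv (pv k)"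
proof
  assume k: "k < n" and h: "nx (nx k) = pv (pv k)"
  have a: "\<And>j. int (nx j) mod int n = (int j + 1) mod int n" by (rule nx_int)
  have b: "\<And>j. j < n \<Longrightarrow> int (pv j) mod int n = (int j - 1) mod int n" by (rule pv_int)
  have "(int k + 2) mod int n = (int k - 2) mod int n"
    using a[of "nx k"] a[of k] b[OF k] b[of "pv k"] h by (simp add: mod_simps add.assoc diff_diff_eq)
  hence "int n dvd 4" by (simp add: mod_eq_dvd_iff)
  thus False using n5 zdvd_imp_le[of "int n"] by fastforce
qed

lemma coords_eq:
  assumes x: "x \<in> VV" and y: "y \<in> VV" and e: "bk x = bk y" "la x = la y" "lb x = lb y"
  shows "x = y"
proof -
  have "x = lab (bk x) (la x) (lb x)" using lab_coords[OF x] by simp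
  also have "\<dots> = lab (bk y) (la y) (lb y)" using e by simp
  also have "\<dots> = y" by (rule lab_coords[OF y])
  finally show ?thesis .
qed

lemma EE_cases:
  assumes "e \<in> EE"
  obtains p q where "e = {p,q}" "p \<in> VV" "q \<in> VV" "fw p q \<or> fw q p"
proof -
  from assms obtain i where i: "i < 2*n" and
    "e = {(False,i),(False,(i+1) mod (2*n))} \<or> e = {(True,i),(True,(i+(n+1)) mod (2*n))}
     \<or> e = {(False,i),(True,i)} \<or> e = {(False,i),(True,(i + 2*n - (n+2)) mod (2*n))}"
    unfolding rw_edges_def by blast
  moreover have m: "j mod (2*n) < 2*n" for j using n5 by simp
  ultimately consider "e = {(False,i),(False,(i+1) mod (2*n))}" | "e = {(True,i),(True,(i+(n+1)) mod (2*n))}"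
     | "e = {(False,i),(True,i)}" | "e = {(False,i),(True,(i + 2*n - (n+2)) mod (2*n))}" by blast
  then show ?thesis
  proof cases
    case 1 show ?thesis by (rule that[OF 1]) (use i m fam_fw(1)[OF i] in \<open>simp_all add: rw_verts_def\<close>)
  next
    case 2 show ?thesis by (rule that[OF 2]) (use i m fam_fw(2)[OF i] in \<open>simp_all add: rw_verts_def\<close>)
  next
    case 3 show ?thesis by (rule that[OF 3]) (use i m fam_fw(3)[OF i] in \<open>simp_all add: rw_verts_def\<close>)
  next
    case 4 show ?thesis by (rule that[OF 4]) (use i m fam_fw(4)[OF i] in \<open>simp_all add: rw_verts_def\<close>)
  qed
qed

lemma adj_iff:
  assumes x: "x \<in> VV" and y: "y \<in> VV"
  shows "{x,y} \<in> EE \<longleftrightarrow> fw x y \<or> fw y x"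
proof
  assume "{x,y} \<in> EE"
  then obtain p q where "{x,y} = {p,q}" "fw p q \<or> fw q p" by (rule EE_cases)
  then show "fw x y \<or> fw y x" by (auto simp: doubleton_eq_iff)
next
  have A: "{p,q} \<in> EE" if p: "p \<in> VV" and q: "q \<in> VV" and f: "fw p q" for p q
  proof -
    have "p = lab (bk p) (la p) (lb p)" using lab_coords[OF p] by simp
    moreover have "q = lab (nx (bk p)) (la q) (la p)" using lab_coords[OF q] f unfolding fw_def by simp
    ultimately show ?thesis using edge_lab[of "bk p" "la p" "lb p" "la q"] bk_lt[OF p] by simp
  qed
  assume "fw x y \<or> fw y x"
  then show "{x,y} \<in> EE" using A[OF x y] A[OF y x] by (auto simp: insert_commute)
qed

lemma fw_bk_pv: assumes "x \<in> VV" "y \<in> VV" shows "fw y x \<longleftrightarrow> bk y = pv (bk x) \<and> la y = lb x"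
  unfolding fw_def using bk_lt[OF assms(1)] bk_lt[OF assms(2)] by (metis nx_pv pv_nx)

end


context RW begin

definition adj :: "bool \<times> nat \<Rightarrow> bool \<times> nat \<Rightarrow> bool" where "adj x y \<longleftrightarrow> {x,y} \<in> EE"

lemma adj_sym: "adj x y = adj y x" unfolding adj_def by (simp add: insert_commute)

lemma adj_coords:
  assumes x: "x \<in> VV" and z: "z \<in> VV"
  shows "adj x z \<longleftrightarrow> (bk z = nx (bk x) \<and> lb z = la x) \<or> (bk z = pv (bk x) \<and> la z = lb x)"
  unfolding adj_def adj_iff[OF x z] fw_bk_pv[OF x z] by (simp add: fw_def)

lemma adj_fwd: "x \<in> VV \<Longrightarrow> z \<in> VV \<Longrightarrow> adj x z \<Longrightarrow> bk z = nx (bk x) \<Longrightarrow> lb z = la x"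
  using adj_coords nx_neq_pv bk_lt by metis
lemma adj_bwd: "x \<in> VV \<Longrightarrow> z \<in> VV \<Longrightarrow> adj x z \<Longrightarrow> bk z = pv (bk x) \<Longrightarrow> la z = lb x"
  using adj_coords nx_neq_pv bk_lt by metis

lemma adj_lab_fwd: "x \<in> VV \<Longrightarrow> adj x (lab (nx (bk x)) a (la x))"
  using adj_coords[OF _ lab_in] bk_lab la_lab lb_lab by simp
lemma adj_lab_bwd: "x \<in> VV \<Longrightarrow> adj x (lab (pv (bk x)) (lb x) b)"
  using adj_coords[OF _ lab_in] bk_lab la_lab lb_lab by simp

definition cn :: "bool \<times> nat \<Rightarrow> bool \<times> nat \<Rightarrow> bool" where
  "cn x y \<longleftrightarrow> (\<exists>z1 z2. z1 \<noteq> z2 \<and> z1 \<in> VV \<and> z2 \<in> VV \<and> adj x z1 \<and> adj y z1 \<and> adj x z2 \<and> adj y z2)"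

lemma twin:
  assumes x: "x \<in> VV" and y: "y \<in> VV"
  shows "cn x y \<longleftrightarrow> bk x = bk y \<and> (la x = la y \<or> lb x = lb y)"
proof
  assume "cn x y"
  then obtain z1 z2 where z: "z1 \<noteq> z2" "z1 \<in> VV" "z2 \<in> VV" "adj x z1" "adj y z1" "adj x z2" "adj y z2"
    unfolding cn_def by blast
  have kx: "bk x < n" and ky: "bk y < n" using bk_lt x y by auto
  note c1 = adj_coords[OF x z(2)] adj_coords[OF y z(2)]
  note c2 = adj_coords[OF x z(3)] adj_coords[OF y z(3)]
  show "bk x = bk y \<and> (la x = la y \<or> lb x = lb y)"
  proof (cases "bk x = bk y")
    case True
    then show ?thesis using z(4,5) c1 nx_neq_pv[OF kx] by auto
  next
    case False
    have ne1: "nx (bk x) \<noteq> nx (bk y)" using nx_inj[OF kx ky] False by blast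
    have ne2: "pv (bk x) \<noteq> pv (bk y)" using pv_inj[OF kx ky] False by blast
    have ne3: "\<not> (nx (bk x) = pv (bk y) \<and> pv (bk x) = nx (bk y))"
    proof
      assume h: "nx (bk x) = pv (bk y) \<and> pv (bk x) = nx (bk y)"
      then have "bk y = nx (nx (bk x))" using nx_pv[OF ky] by metis
      moreover have "bk y = pv (pv (bk x))" using h pv_nx[OF ky] by metis
      ultimately show False using nx2_neq_pv2[OF kx] by simp
    qed
    have "z1 = z2"
      using z(4-7) c1 c2 ne1 ne2 ne3 coords_eq[OF z(2,3)] by metis
    with z(1) show ?thesis by simp
  qed
next
  assume h: "bk x = bk y \<and> (la x = la y \<or> lb x = lb y)"
  have kx: "bk x < n" using bk_lt x by auto
  show "cn x y"
  proof (cases "la x = la y")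
    case True
    show ?thesis unfolding cn_def
      apply (rule exI[of _ "lab (nx (bk x)) False (la x)"], rule exI[of _ "lab (nx (bk x)) True (la x)"])
      using adj_lab_fwd[OF x] adj_lab_fwd[OF y] h True la_lab[of "nx (bk x)"] lab_in by (metis nx_lt)
  next
    case False
    with h have "lb x = lb y" by simp
    show ?thesis unfolding cn_def
      apply (rule exI[of _ "lab (pv (bk x)) (lb x) False"], rule exI[of _ "lab (pv (bk x)) (lb x) True"])
      using adj_lab_bwd[OF x] adj_lab_bwd[OF y] h \<open>lb x = lb y\<close> lb_lab[of "pv (bk x)"] lab_in by (metis pv_lt)
  qed
qed

definition gaut :: "(bool \<times> nat \<Rightarrow> bool \<times> nat) \<Rightarrow> bool" where
  "gaut g \<longleftrightarrow> bij_betw g VV VV \<and> (\<forall>x\<in>VV. \<forall>y\<in>VV. adj (g x) (g y) \<longleftrightarrow> adj x y)"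

lemma gaut_in: "gaut g \<Longrightarrow> x \<in> VV \<Longrightarrow> g x \<in> VV"
  unfolding gaut_def bij_betw_def by blast
lemma gaut_inj: "gaut g \<Longrightarrow> x \<in> VV \<Longrightarrow> y \<in> VV \<Longrightarrow> g x = g y \<Longrightarrow> x = y"
  unfolding gaut_def bij_betw_def inj_on_def by blast
lemma gaut_adj: "gaut g \<Longrightarrow> x \<in> VV \<Longrightarrow> y \<in> VV \<Longrightarrow> adj (g x) (g y) \<longleftrightarrow> adj x y"
  unfolding gaut_def by blast

lemma gaut_inv:
  assumes g: "gaut g"
  shows "gaut (inv_into VV g)" and "\<And>x. x \<in> VV \<Longrightarrow> g (inv_into VV g x) = x"
    and "\<And>x. x \<in> VV \<Longrightarrow> inv_into VV g (g x) = x"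
proof -
  have b: "bij_betw g VV VV" using g unfolding gaut_def by blast
  show i1: "\<And>x. x \<in> VV \<Longrightarrow> g (inv_into VV g x) = x" using b by (meson bij_betw_inv_into_right)
  show i2: "\<And>x. x \<in> VV \<Longrightarrow> inv_into VV g (g x) = x" using b by (meson bij_betw_inv_into_left)
  have bi: "bij_betw (inv_into VV g) VV VV" using b by (rule bij_betw_inv_into)
  have iv: "\<And>x. x \<in> VV \<Longrightarrow> inv_into VV g x \<in> VV" using bi unfolding bij_betw_def by blast
  show "gaut (inv_into VV g)" unfolding gaut_def
  proof (intro conjI ballI bi)
    fix x y assume x: "x \<in> VV" and y: "y \<in> VV"
    show "adj (inv_into VV g x) (inv_into VV g y) = adj x y"
      using gaut_adj[OF g iv[OF x] iv[OF y]] i1 x y by simp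
  qed
qed

lemma cn_pres: "gaut g \<Longrightarrow> x \<in> VV \<Longrightarrow> y \<in> VV \<Longrightarrow> cn x y \<Longrightarrow> cn (g x) (g y)"
  unfolding cn_def
  by (metis gaut_adj gaut_in gaut_inj)

lemma same_blk:
  assumes g: "gaut g" and x: "x \<in> VV" and y: "y \<in> VV" and e: "bk x = bk y"
  shows "bk (g x) = bk (g y)"
proof -
  have tw: "bk (g p) = bk (g q)" if p: "p \<in> VV" and q: "q \<in> VV" and pq: "p \<noteq> q"
      and h: "bk p = bk q \<and> (la p = la q \<or> lb p = lb q)" for p q
  proof -
    have "cn p q" using twin[OF p q] h by simp
    then have "cn (g p) (g q)" by (rule cn_pres[OF g p q])
    then show ?thesis using twin[OF gaut_in[OF g p] gaut_in[OF g q]] by simp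
  qed
  show ?thesis
  proof (cases "x = y \<or> la x = la y \<or> lb x = lb y")
    case True
    then show ?thesis using tw[OF x y] e by auto
  next
    case False
    define w where "w = lab (bk x) (la x) (lb y)"
    have kx: "bk x < n" using bk_lt x by simp
    have w: "w \<in> VV" "bk w = bk x" "la w = la x" "lb w = lb y"
      unfolding w_def using lab_in[OF kx] bk_lab[OF kx] la_lab[OF kx] lb_lab[OF kx] by auto
    have "bk (g x) = bk (g w)" using tw[OF x w(1)] w False by (metis)
    also have "\<dots> = bk (g y)" using tw[OF w(1) y] w False e by (metis)
    finally show ?thesis .
  qed
qed

definition bmap :: "(bool \<times> nat \<Rightarrow> bool \<times> nat) \<Rightarrow> nat \<Rightarrow> nat" where
  "bmap g k = bk (g (lab k False False))"

lemma bmap_bk: "gaut g \<Longrightarrow> x \<in> VV \<Longrightarrow> bk (g x) = bmap g (bk x)"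
  unfolding bmap_def using same_blk lab_in bk_lab bk_lt by metis

lemma bmap_lt: "gaut g \<Longrightarrow> k < n \<Longrightarrow> bmap g k < n"
  unfolding bmap_def using gaut_in lab_in bk_lt by metis

lemma bmap_inj: assumes g: "gaut g" and k: "k < n" and j: "j < n" and e: "bmap g k = bmap g j" shows "k = j"
proof -
  let ?h = "inv_into VV g"
  have "bk (?h (g (lab k False False))) = bk (?h (g (lab j False False)))"
    using same_blk[OF gaut_inv(1)[OF g] gaut_in[OF g lab_in[OF k]] gaut_in[OF g lab_in[OF j]]] e
    unfolding bmap_def by simp
  then show ?thesis using gaut_inv(3)[OF g] lab_in k j bk_lab by metis
qed

lemma bmap_nx: assumes g: "gaut g" and k: "k < n"
  shows "bmap g (nx k) = nx (bmap g k) \<or> bmap g (nx k) = pv (bmap g k)"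
proof -
  have "adj (lab k False False) (lab (nx k) False False)"
    using adj_lab_fwd[OF lab_in[OF k]] bk_lab[OF k] la_lab[OF k] by simp
  then have "adj (g (lab k False False)) (g (lab (nx k) False False))"
    using gaut_adj[OF g lab_in[OF k] lab_in[OF nx_lt]] by simp
  then show ?thesis using adj_coords[OF gaut_in[OF g lab_in[OF k]] gaut_in[OF g lab_in[OF nx_lt]]]
    unfolding bmap_def by blast
qed

lemma dihedral:
  fixes \<beta> :: "nat \<Rightarrow> nat"
  assumes lt: "\<And>k. k < n \<Longrightarrow> \<beta> k < n" and inj: "\<And>k j. k < n \<Longrightarrow> j < n \<Longrightarrow> \<beta> k = \<beta> j \<Longrightarrow> k = j"
    and st: "\<And>k. k < n \<Longrightarrow> \<beta> (nx k) = nx (\<beta> k) \<or> \<beta> (nx k) = pv (\<beta> k)"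
  shows "(\<forall>k<n. \<beta> (nx k) = nx (\<beta> k)) \<or> (\<forall>k<n. \<beta> (nx k) = pv (\<beta> k))"
proof -
  define P where "P k \<longleftrightarrow> \<beta> (nx k) = nx (\<beta> k)" for k
  have ex: "\<not> P k \<longleftrightarrow> \<beta> (nx k) = pv (\<beta> k)" if k: "k < n" for k
    using st[OF k] nx_neq_pv[OF lt[OF k]] unfolding P_def by auto
  have step: "P k \<longleftrightarrow> P (nx k)" if k: "k < n" for k
  proof -
    have k1: "nx k < n" by simp
    have k2: "nx (nx k) < n" by simp
    have ne: "nx (nx k) \<noteq> k" by (rule nx2_neq[OF k])
    show ?thesis
    proof
      assume "P k"
      show "P (nx k)"
      proof (rule ccontr)
        assume "\<not> P (nx k)"
        then have "\<beta> (nx (nx k)) = pv (\<beta> (nx k))" using ex[OF k1] by simp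
        also have "\<dots> = \<beta> k" using \<open>P k\<close> unfolding P_def using pv_nx lt[OF k] by simp
        finally show False using inj[OF k2 k] ne by simp
      qed
    next
      assume "P (nx k)"
      show "P k"
      proof (rule ccontr)
        assume "\<not> P k"
        then have a: "\<beta> (nx k) = pv (\<beta> k)" using ex[OF k] by simp
        have "\<beta> (nx (nx k)) = nx (\<beta> (nx k))" using \<open>P (nx k)\<close> unfolding P_def by simp
        also have "\<dots> = \<beta> k" using a nx_pv lt[OF k] by simp
        finally show False using inj[OF k2 k] ne by simp
      qed
    qed
  qed
  have all: "k < n \<Longrightarrow> P k = P 0" for k
  proof (induction k)
    case 0 then show ?case by simp
  next
    case (Suc k)
    have "nx k = Suc k" using Suc.prems nx_simp by simp
    then show ?case using Suc step[of k] by simp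
  qed
  show ?thesis
  proof (cases "P 0")
    case True then show ?thesis using all unfolding P_def by blast
  next
    case False then show ?thesis using all ex by blast
  qed
qed

lemma gaut_coord_inj:
  assumes g: "gaut g" and p: "p \<in> VV" and q: "q \<in> VV" and e: "bk p = bk q"
    and a: "la (g p) = la (g q)" and b: "lb (g p) = lb (g q)"
  shows "p = q"
  using gaut_inj[OF g p q] coords_eq[OF gaut_in[OF g p] gaut_in[OF g q] same_blk[OF g p q e] a b] by simp

definition pres :: "(bool \<times> nat \<Rightarrow> bool \<times> nat) \<Rightarrow> bool" where
  "pres g \<longleftrightarrow> (\<forall>k<n. bmap g (nx k) = nx (bmap g k))"
definition rvs :: "(bool \<times> nat \<Rightarrow> bool \<times> nat) \<Rightarrow> bool" where
  "rvs g \<longleftrightarrow> (\<forall>k<n. bmap g (nx k) = pv (bmap g k))"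

lemma pres_or_rvs: "gaut g \<Longrightarrow> pres g \<or> rvs g"
  unfolding pres_def rvs_def
  by (rule dihedral) (use bmap_lt bmap_inj bmap_nx in blast)+

lemma pres_pv: "gaut g \<Longrightarrow> pres g \<Longrightarrow> k < n \<Longrightarrow> bmap g (pv k) = pv (bmap g k)"
  unfolding pres_def by (metis nx_pv pv_lt pv_nx bmap_lt)
lemma rvs_pv: "gaut g \<Longrightarrow> rvs g \<Longrightarrow> k < n \<Longrightarrow> bmap g (pv k) = nx (bmap g k)"
  unfolding rvs_def by (metis nx_pv pv_lt bmap_lt)

lemma fwd_nb: assumes x: "x \<in> VV" and y: "y \<in> VV" and e: "bk x = bk y" "la x = la y"
  defines "z \<equiv> lab (nx (bk x)) False (la x)"
  shows "z \<in> VV" "adj x z" "adj y z" "bk z = nx (bk x)"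
  using adj_lab_fwd[OF x] adj_lab_fwd[OF y] e lab_in bk_lab unfolding z_def by auto
lemma bwd_nb: assumes x: "x \<in> VV" and y: "y \<in> VV" and e: "bk x = bk y" "lb x = lb y"
  defines "z \<equiv> lab (pv (bk x)) (lb x) False"
  shows "z \<in> VV" "adj x z" "adj y z" "bk z = pv (bk x)"
  using adj_lab_bwd[OF x] adj_lab_bwd[OF y] e lab_in bk_lab unfolding z_def by auto

lemma pres_la: assumes g: "gaut g" "pres g" and x: "x \<in> VV" and y: "y \<in> VV" and e: "bk x = bk y" "la x = la y"
  shows "la (g x) = la (g y)"
proof -
  note z = fwd_nb[OF x y e]
  let ?z = "lab (nx (bk x)) False (la x)"
  have bz: "bk (g ?z) = nx (bk (g x))" using bmap_bk[OF g(1)] z(1,4) x g(2) bk_lt unfolding pres_def by simp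
  have bz': "bk (g ?z) = nx (bk (g y))" using bz same_blk[OF g(1) x y e(1)] by simp
  show ?thesis using adj_fwd[OF gaut_in[OF g(1) x] gaut_in[OF g(1) z(1)] _ bz] adj_fwd[OF gaut_in[OF g(1) y] gaut_in[OF g(1) z(1)] _ bz']
    gaut_adj[OF g(1)] x y z by metis
qed
lemma pres_lb: assumes g: "gaut g" "pres g" and x: "x \<in> VV" and y: "y \<in> VV" and e: "bk x = bk y" "lb x = lb y"
  shows "lb (g x) = lb (g y)"
proof -
  note z = bwd_nb[OF x y e]
  let ?z = "lab (pv (bk x)) (lb x) False"
  have bz: "bk (g ?z) = pv (bk (g x))" using bmap_bk[OF g(1)] z(1,4) x pres_pv[OF g] bk_lt by simp
  have bz': "bk (g ?z) = pv (bk (g y))" using bz same_blk[OF g(1) x y e(1)] by simp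
  show ?thesis using adj_bwd[OF gaut_in[OF g(1) x] gaut_in[OF g(1) z(1)] _ bz] adj_bwd[OF gaut_in[OF g(1) y] gaut_in[OF g(1) z(1)] _ bz']
    gaut_adj[OF g(1)] x y z by metis
qed
lemma rvs_la: assumes g: "gaut g" "rvs g" and x: "x \<in> VV" and y: "y \<in> VV" and e: "bk x = bk y" "la x = la y"
  shows "lb (g x) = lb (g y)"
proof -
  note z = fwd_nb[OF x y e]
  let ?z = "lab (nx (bk x)) False (la x)"
  have bz: "bk (g ?z) = pv (bk (g x))" using bmap_bk[OF g(1)] z(1,4) x g(2) bk_lt unfolding rvs_def by simp
  have bz': "bk (g ?z) = pv (bk (g y))" using bz same_blk[OF g(1) x y e(1)] by simp
  show ?thesis using adj_bwd[OF gaut_in[OF g(1) x] gaut_in[OF g(1) z(1)] _ bz] adj_bwd[OF gaut_in[OF g(1) y] gaut_in[OF g(1) z(1)] _ bz']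
    gaut_adj[OF g(1)] x y z by metis
qed
lemma rvs_lb: assumes g: "gaut g" "rvs g" and x: "x \<in> VV" and y: "y \<in> VV" and e: "bk x = bk y" "lb x = lb y"
  shows "la (g x) = la (g y)"
proof -
  note z = bwd_nb[OF x y e]
  let ?z = "lab (pv (bk x)) (lb x) False"
  have bz: "bk (g ?z) = nx (bk (g x))" using bmap_bk[OF g(1)] z(1,4) x rvs_pv[OF g] bk_lt by simp
  have bz': "bk (g ?z) = nx (bk (g y))" using bz same_blk[OF g(1) x y e(1)] by simp
  show ?thesis using adj_fwd[OF gaut_in[OF g(1) x] gaut_in[OF g(1) z(1)] _ bz] adj_fwd[OF gaut_in[OF g(1) y] gaut_in[OF g(1) z(1)] _ bz']
    gaut_adj[OF g(1)] x y z by metis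
qed

definition gA :: "(bool \<times> nat \<Rightarrow> bool \<times> nat) \<Rightarrow> nat \<Rightarrow> bool" where
  "gA g k = la (g (lab k False False))"
definition gB :: "(bool \<times> nat \<Rightarrow> bool \<times> nat) \<Rightarrow> nat \<Rightarrow> bool" where
  "gB g k = lb (g (lab k False False))"

lemma pres_coords:
  assumes g: "gaut g" "pres g" and x: "x \<in> VV"
  shows "la (g x) = (la x \<noteq> gA g (bk x))" "lb (g x) = (lb x \<noteq> gB g (bk x))"
proof -
  let ?k = "bk x"
  have k: "?k < n" using bk_lt[OF x] .
  let ?x0 = "lab ?k False False" and ?x1 = "lab ?k True False" and ?x2 = "lab ?k False True"
  have v: "?x0 \<in> VV" "?x1 \<in> VV" "?x2 \<in> VV" using lab_in[OF k] by auto
  have c: "bk ?x0 = ?k" "bk ?x1 = ?k" "bk ?x2 = ?k" "la ?x0 = False" "la ?x1 = True" "la ?x2 = False"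
     "lb ?x0 = False" "lb ?x1 = False" "lb ?x2 = True" using bk_lab[OF k] la_lab[OF k] lb_lab[OF k] by auto
  have ne1: "la (g ?x1) \<noteq> la (g ?x0)"
  proof
    assume h: "la (g ?x1) = la (g ?x0)"
    have "lb (g ?x1) = lb (g ?x0)" using pres_lb[OF g v(2) v(1)] c by simp
    then have "?x1 = ?x0" using gaut_coord_inj[OF g(1) v(2) v(1)] c h by simp
    then show False using c by simp
  qed
  have ne2: "lb (g ?x2) \<noteq> lb (g ?x0)"
  proof
    assume h: "lb (g ?x2) = lb (g ?x0)"
    have "la (g ?x2) = la (g ?x0)" using pres_la[OF g v(3) v(1)] c by simp
    then have "?x2 = ?x0" using gaut_coord_inj[OF g(1) v(3) v(1)] c h by simp
    then show False using c by simp
  qed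
  show "la (g x) = (la x \<noteq> gA g (bk x))"
  proof (cases "la x")
    case True
    then have "la (g x) = la (g ?x1)" using pres_la[OF g x v(2)] c by simp
    then show ?thesis using ne1 True unfolding gA_def by simp
  next
    case False
    then have "la (g x) = la (g ?x0)" using pres_la[OF g x v(1)] c by simp
    then show ?thesis using False unfolding gA_def by simp
  qed
  show "lb (g x) = (lb x \<noteq> gB g (bk x))"
  proof (cases "lb x")
    case True
    then have "lb (g x) = lb (g ?x2)" using pres_lb[OF g x v(3)] c by simp
    then show ?thesis using ne2 True unfolding gB_def by simp
  next
    case False
    then have "lb (g x) = lb (g ?x0)" using pres_lb[OF g x v(1)] c by simp
    then show ?thesis using False unfolding gB_def by simp
  qed
qed

lemma rvs_coords:
  assumes g: "gaut g" "rvs g" and x: "x \<in> VV"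
  shows "la (g x) = (lb x \<noteq> gA g (bk x))" "lb (g x) = (la x \<noteq> gB g (bk x))"
proof -
  let ?k = "bk x"
  have k: "?k < n" using bk_lt[OF x] .
  let ?x0 = "lab ?k False False" and ?x1 = "lab ?k True False" and ?x2 = "lab ?k False True"
  have v: "?x0 \<in> VV" "?x1 \<in> VV" "?x2 \<in> VV" using lab_in[OF k] by auto
  have c: "bk ?x0 = ?k" "bk ?x1 = ?k" "bk ?x2 = ?k" "la ?x0 = False" "la ?x1 = True" "la ?x2 = False"
     "lb ?x0 = False" "lb ?x1 = False" "lb ?x2 = True" using bk_lab[OF k] la_lab[OF k] lb_lab[OF k] by auto
  have ne1: "lb (g ?x1) \<noteq> lb (g ?x0)"
  proof
    assume h: "lb (g ?x1) = lb (g ?x0)"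
    have "la (g ?x1) = la (g ?x0)" using rvs_lb[OF g v(2) v(1)] c by simp
    then have "?x1 = ?x0" using gaut_coord_inj[OF g(1) v(2) v(1)] c h by simp
    then show False using c by simp
  qed
  have ne2: "la (g ?x2) \<noteq> la (g ?x0)"
  proof
    assume h: "la (g ?x2) = la (g ?x0)"
    have "lb (g ?x2) = lb (g ?x0)" using rvs_la[OF g v(3) v(1)] c by simp
    then have "?x2 = ?x0" using gaut_coord_inj[OF g(1) v(3) v(1)] c h by simp
    then show False using c by simp
  qed
  show "la (g x) = (lb x \<noteq> gA g (bk x))"
  proof (cases "lb x")
    case True
    then have "la (g x) = la (g ?x2)" using rvs_lb[OF g x v(3)] c by simp
    then show ?thesis using ne2 True unfolding gA_def by simp
  next
    case False
    then have "la (g x) = la (g ?x0)" using rvs_lb[OF g x v(1)] c by simp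
    then show ?thesis using False unfolding gA_def by simp
  qed
  show "lb (g x) = (la x \<noteq> gB g (bk x))"
  proof (cases "la x")
    case True
    then have "lb (g x) = lb (g ?x1)" using rvs_la[OF g x v(2)] c by simp
    then show ?thesis using ne1 True unfolding gB_def by simp
  next
    case False
    then have "lb (g x) = lb (g ?x0)" using rvs_la[OF g x v(1)] c by simp
    then show ?thesis using False unfolding gB_def by simp
  qed
qed

lemma pres_bmap_int: assumes g: "gaut g" "pres g"
  shows "k < n \<Longrightarrow> int (bmap g k) mod int n = (int (bmap g 0) + int k) mod int n"
proof (induction k)
  case 0 then show ?case using bmap_lt[OF g(1)] by simp
next
  case (Suc k)
  then have k: "k < n" by simp
  have "bmap g (Suc k) = nx (bmap g k)" using g(2) nx_simp[of k] Suc.prems k unfolding pres_def by (metis Suc_eq_plus1)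
  then have "int (bmap g (Suc k)) mod int n = (int (bmap g k) + 1) mod int n" using nx_int by simp
  also have "\<dots> = (int (bmap g k) mod int n + 1) mod int n" by (simp add: mod_simps)
  also have "\<dots> = (int (bmap g 0) + int (Suc k)) mod int n" using Suc.IH[OF k] by (simp add: mod_simps algebra_simps)
  finally show ?case .
qed
lemma rvs_bmap_int: assumes g: "gaut g" "rvs g"
  shows "k < n \<Longrightarrow> int (bmap g k) mod int n = (int (bmap g 0) - int k) mod int n"
proof (induction k)
  case 0 then show ?case using bmap_lt[OF g(1)] by simp
next
  case (Suc k)
  then have k: "k < n" by simp
  have "bmap g (Suc k) = pv (bmap g k)" using g(2) nx_simp[of k] Suc.prems k unfolding rvs_def by (metis Suc_eq_plus1)
  then have "int (bmap g (Suc k)) mod int n = (int (bmap g k) - 1) mod int n" using pv_int by simp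
  also have "\<dots> = (int (bmap g k) mod int n - 1) mod int n" by (simp add: mod_simps)
  also have "\<dots> = (int (bmap g 0) - int (Suc k)) mod int n" using Suc.IH[OF k] by (simp add: mod_simps algebra_simps)
  finally show ?case .
qed

definition perd :: "(int \<Rightarrow> bool) \<Rightarrow> bool" where "perd \<alpha> \<longleftrightarrow> (\<forall>m. \<alpha> (m + int n) = \<alpha> m)"

lemma perd_mult: assumes "perd \<alpha>" shows "\<alpha> (m + int n * int q) = \<alpha> m"
proof (induction q)
  case 0 then show ?case by simp
next
  case (Suc q)
  have "\<alpha> (m + int n * int (Suc q)) = \<alpha> ((m + int n * int q) + int n)" by (simp add: algebra_simps)
  also have "\<dots> = \<alpha> (m + int n * int q)" using assms unfolding perd_def by blast
  finally show ?case using Suc by simp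
qed

lemma perd_mod: assumes "perd \<alpha>" shows "\<alpha> (m mod int n) = \<alpha> m"
proof (cases "m div int n \<ge> 0")
  case True
  have "m = m mod int n + int n * int (nat (m div int n))" using True by simp
  then show ?thesis using perd_mult[OF assms, of "m mod int n" "nat (m div int n)"] by simp
next
  case False
  have "m mod int n = m + int n * int (nat (- (m div int n)))" using False
    by (simp add: minus_div_mult_eq_mod [symmetric] algebra_simps)
  then show ?thesis using perd_mult[OF assms, of m "nat (- (m div int n))"] by simp
qed

lemma perd_cong: "perd \<alpha> \<Longrightarrow> a mod int n = b mod int n \<Longrightarrow> \<alpha> a = \<alpha> b"
  by (metis perd_mod)

definition nel :: "(int \<Rightarrow> bool) \<Rightarrow> bool \<times> nat \<Rightarrow> bool \<times> nat" where
  "nel \<alpha> x = (if x \<in> VV then lab (bk x) (la x \<noteq> \<alpha> (int (bk x))) (lb x \<noteq> \<alpha> (int (bk x) - 1)) else x)"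

lemma nel_out: "x \<notin> VV \<Longrightarrow> nel \<alpha> x = x" unfolding nel_def by simp
lemma nel_in: "x \<in> VV \<Longrightarrow> nel \<alpha> x \<in> VV" unfolding nel_def using lab_in bk_lt by simp
lemma nel_c: assumes "x \<in> VV"
  shows "bk (nel \<alpha> x) = bk x" "la (nel \<alpha> x) = (la x \<noteq> \<alpha> (int (bk x)))" "lb (nel \<alpha> x) = (lb x \<noteq> \<alpha> (int (bk x) - 1))"
  unfolding nel_def using assms bk_lt bk_lab la_lab lb_lab by auto

lemma nel_comp: "nel \<alpha> \<circ> nel \<gamma> = nel (\<lambda>m. \<alpha> m \<noteq> \<gamma> m)"
proof
  fix x show "(nel \<alpha> \<circ> nel \<gamma>) x = nel (\<lambda>m. \<alpha> m \<noteq> \<gamma> m) x"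
  proof (cases "x \<in> VV")
    case True
    show ?thesis by (rule coords_eq) (use True nel_in nel_c in auto)
  next
    case False then show ?thesis by (simp add: nel_out)
  qed
qed

lemma nel_zero: "nel (\<lambda>m. False) = id"
proof
  fix x show "nel (\<lambda>m. False) x = id x" unfolding nel_def using lab_coords by auto
qed

lemma conj_pres:
  assumes g: "gaut g" "pres g" and out: "\<And>x. x \<notin> VV \<Longrightarrow> g x = x" and p: "perd \<alpha>"
  shows "g \<circ> nel \<alpha> = nel (\<lambda>m. \<alpha> (m - int (bmap g 0))) \<circ> g"
proof
  fix x
  show "(g \<circ> nel \<alpha>) x = (nel (\<lambda>m. \<alpha> (m - int (bmap g 0))) \<circ> g) x"
  proof (cases "x \<in> VV")
    case x: True
    let ?k = "bk x"
    have k: "?k < n" using bk_lt[OF x] .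
    have bm: "int (bmap g ?k) mod int n = (int (bmap g 0) + int ?k) mod int n" using pres_bmap_int[OF g k] .
    have e1: "\<alpha> (int (bmap g ?k) - int (bmap g 0)) = \<alpha> (int ?k)"
      by (rule perd_cong[OF p]) (metis bm add_diff_cancel_left' mod_diff_left_eq)
    have e2: "\<alpha> (int (bmap g ?k) - 1 - int (bmap g 0)) = \<alpha> (int ?k - 1)"
      by (rule perd_cong[OF p]) (metis bm add_diff_cancel_left' mod_diff_left_eq diff_right_commute)
    have gx: "g x \<in> VV" using gaut_in[OF g(1) x] .
    have nx': "nel \<alpha> x \<in> VV" using nel_in[OF x] .
    let ?a = "\<lambda>m. \<alpha> (m - int (bmap g 0))"
    have b1: "bk (g (nel \<alpha> x)) = bmap g ?k" using bmap_bk[OF g(1) nx'] nel_c[OF x] by simp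
    have b2: "bk (nel ?a (g x)) = bmap g ?k" using nel_c(1)[OF gx] bmap_bk[OF g(1) x] by simp
    have l1: "la (g (nel \<alpha> x)) = ((la x \<noteq> \<alpha> (int ?k)) \<noteq> gA g ?k)" using pres_coords(1)[OF g nx'] nel_c[OF x] by simp
    have l2: "la (nel ?a (g x)) = ((la x \<noteq> gA g ?k) \<noteq> \<alpha> (int ?k))"
      using nel_c(2)[OF gx] pres_coords(1)[OF g x] bmap_bk[OF g(1) x] e1 by simp
    have m1: "lb (g (nel \<alpha> x)) = ((lb x \<noteq> \<alpha> (int ?k - 1)) \<noteq> gB g ?k)" using pres_coords(2)[OF g nx'] nel_c[OF x] by simp
    have m2: "lb (nel ?a (g x)) = ((lb x \<noteq> gB g ?k) \<noteq> \<alpha> (int ?k - 1))"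
      using nel_c(3)[OF gx] pres_coords(2)[OF g x] bmap_bk[OF g(1) x] e2 by simp
    have "g (nel \<alpha> x) = nel ?a (g x)"
      by (rule coords_eq[OF gaut_in[OF g(1) nx'] nel_in[OF gx]]) (use b1 b2 l1 l2 m1 m2 in auto)
    then show ?thesis by simp
  next
    case False then show ?thesis using out by (simp add: nel_out)
  qed
qed

lemma conj_rvs:
  assumes g: "gaut g" "rvs g" and out: "\<And>x. x \<notin> VV \<Longrightarrow> g x = x" and p: "perd \<alpha>"
  shows "g \<circ> nel \<alpha> = nel (\<lambda>m. \<alpha> (int (bmap g 0) - m - 1)) \<circ> g"
proof
  fix x
  show "(g \<circ> nel \<alpha>) x = (nel (\<lambda>m. \<alpha> (int (bmap g 0) - m - 1)) \<circ> g) x"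
  proof (cases "x \<in> VV")
    case x: True
    let ?k = "bk x"
    have k: "?k < n" using bk_lt[OF x] .
    have bm: "int (bmap g ?k) mod int n = (int (bmap g 0) - int ?k) mod int n" using rvs_bmap_int[OF g k] .
    have dr: "\<And>D. (D - int (bmap g ?k)) mod int n = (D - (int (bmap g 0) - int ?k)) mod int n"
      using bm by (metis mod_diff_right_eq)
    have e1: "\<alpha> (int (bmap g 0) - int (bmap g ?k) - 1) = \<alpha> (int ?k - 1)"
      by (rule perd_cong[OF p]) (use dr[of "int (bmap g 0) - 1"] in \<open>simp add: algebra_simps\<close>)
    have e2: "\<alpha> (int (bmap g 0) - (int (bmap g ?k) - 1) - 1) = \<alpha> (int ?k)"
      by (rule perd_cong[OF p]) (use dr[of "int (bmap g 0)"] in \<open>simp add: algebra_simps\<close>)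
    have gx: "g x \<in> VV" using gaut_in[OF g(1) x] .
    have nx': "nel \<alpha> x \<in> VV" using nel_in[OF x] .
    let ?a = "\<lambda>m. \<alpha> (int (bmap g 0) - m - 1)"
    have b1: "bk (g (nel \<alpha> x)) = bmap g ?k" using bmap_bk[OF g(1) nx'] nel_c[OF x] by simp
    have b2: "bk (nel ?a (g x)) = bmap g ?k" using nel_c(1)[OF gx] bmap_bk[OF g(1) x] by simp
    have l1: "la (g (nel \<alpha> x)) = ((lb x \<noteq> \<alpha> (int ?k - 1)) \<noteq> gA g ?k)" using rvs_coords(1)[OF g nx'] nel_c[OF x] by simp
    have l2: "la (nel ?a (g x)) = ((lb x \<noteq> gA g ?k) \<noteq> \<alpha> (int ?k - 1))"
      using nel_c(2)[OF gx] rvs_coords(1)[OF g x] bmap_bk[OF g(1) x] e1 by simp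
    have m1: "lb (g (nel \<alpha> x)) = ((la x \<noteq> \<alpha> (int ?k)) \<noteq> gB g ?k)" using rvs_coords(2)[OF g nx'] nel_c[OF x] by simp
    have m2: "lb (nel ?a (g x)) = ((la x \<noteq> gB g ?k) \<noteq> \<alpha> (int ?k))"
      using nel_c(3)[OF gx] rvs_coords(2)[OF g x] bmap_bk[OF g(1) x] e2 by simp
    have "g (nel \<alpha> x) = nel ?a (g x)"
      by (rule coords_eq[OF gaut_in[OF g(1) nx'] nel_in[OF gx]]) (use b1 b2 l1 l2 m1 m2 in auto)
    then show ?thesis by simp
  next
    case False then show ?thesis using out by (simp add: nel_out)
  qed
qed

lemma fix_blocks_nel:
  assumes g: "gaut g" "pres g" and b0: "bmap g 0 = 0" and out: "\<And>x. x \<notin> VV \<Longrightarrow> g x = x"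
  shows "g = nel (\<lambda>m. gA g (nat (m mod int n)))"
proof
  have bm: "bmap g k = k" if k: "k < n" for k
  proof -
    have "int (bmap g k) mod int n = int k mod int n" using pres_bmap_int[OF g k] b0 by simp
    then show ?thesis using bmap_lt[OF g(1) k] k by (simp add: zmod_int)
  qed
  have gB: "gB g k = gA g (pv k)" if k: "k < n" for k
  proof -
    let ?x0 = "lab (pv k) False False" and ?y = "lab k False False"
    have v: "?x0 \<in> VV" "?y \<in> VV" using lab_in k by auto
    have "adj ?x0 ?y" using adj_lab_fwd[OF v(1)] bk_lab la_lab k by simp
    then have a: "adj (g ?x0) (g ?y)" using gaut_adj[OF g(1) v] by simp
    have "bk (g ?y) = k" using bmap_bk[OF g(1) v(2)] bk_lab k bm by simp
    moreover have "bk (g ?x0) = pv k" using bmap_bk[OF g(1) v(1)] bk_lab k bm by simp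
    ultimately have "lb (g ?y) = la (g ?x0)" using adj_fwd[OF gaut_in[OF g(1) v(1)] gaut_in[OF g(1) v(2)] a] k by simp
    then show ?thesis unfolding gA_def gB_def by simp
  qed
  fix x
  show "g x = nel (\<lambda>m. gA g (nat (m mod int n))) x"
  proof (cases "x \<in> VV")
    case x: True
    let ?k = "bk x"
    have k: "?k < n" using bk_lt[OF x] .
    have pk: "nat ((int ?k - 1) mod int n) = pv ?k"
      using pv_int[of ?k] pv_lt[of ?k] by (metis nat_int zmod_int mod_less)
    show ?thesis
      using coords_eq[OF gaut_in[OF g(1) x] nel_in[OF x]] nel_c[OF x] pres_coords[OF g x] bmap_bk[OF g(1) x] bm[OF k]
        gB[OF k] pk k by simp
  next
    case False then show ?thesis using out by (simp add: nel_out)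
  qed
qed

end


locale RWM = RW +
  fixes F :: "(bool \<times> nat) set set set set"
  assumes cls: "class_2_01 (rw_verts (2*n)) (rw_edges (2*n) (n+2) (n+1)) F"
begin

abbreviation "GG \<equiv> map_aut VV EE F"

lemma ismap: "is_map VV EE F" using cls unfolding class_2_01_def by (elim conjE)
lemmas ism = ismap[unfolded is_map_def]
lemma faces: "f \<in> F \<Longrightarrow> is_face EE f" using ism[THEN conjunct2, THEN conjunct2, THEN conjunct2, THEN conjunct1] by blast
lemma card2: "e \<in> EE \<Longrightarrow> card {f\<in>F. e \<in> face_edges f} = 2"
  using ism[THEN conjunct2, THEN conjunct2, THEN conjunct2, THEN conjunct2, THEN conjunct1] by blast
lemma link: "v \<in> VV \<Longrightarrow> e \<in> EE \<Longrightarrow> e' \<in> EE \<Longrightarrow> v \<in> e \<Longrightarrow> v \<in> e' \<Longrightarrow> (e, e') \<in> (vertex_link F v)\<^sup>*"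
  using ism[THEN conjunct2, THEN conjunct2, THEN conjunct2, THEN conjunct2, THEN conjunct2] by blast
lemma conn: "x \<in> VV \<Longrightarrow> y \<in> VV \<Longrightarrow> (x, y) \<in> {(a, b). {a, b} \<in> EE}\<^sup>*"
  using ism[THEN conjunct2, THEN conjunct2, THEN conjunct1] unfolding graph_connected_def by blast
lemmas clsf = cls[unfolded class_2_01_def, THEN conjunct2, THEN conjunct2]
lemma orb0: "\<Phi> \<in> flags F \<Longrightarrow> flag0 \<Phi> \<in> flag_orbit VV EE F \<Phi>" using clsf by blast
lemma orb1: "\<Phi> \<in> flags F \<Longrightarrow> flag1 \<Phi> \<in> flag_orbit VV EE F \<Phi>" using clsf by blast
lemma orb2: "\<Phi> \<in> flags F \<Longrightarrow> flag2 F \<Phi> \<notin> flag_orbit VV EE F \<Phi>" using clsf by blast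

lemma in_orbit: assumes "\<Psi> \<in> flag_orbit VV EE F (v,e,f)"
  shows "\<exists>g\<in>GG. g v = fst \<Psi> \<and> img_edge g e = fst (snd \<Psi>) \<and> img_face g f = snd (snd \<Psi>)"
proof -
  obtain g where "g \<in> GG" "\<Psi> = flag_act g (v,e,f)" using assms unfolding flag_orbit_def by blast
  then show ?thesis unfolding flag_act_def by auto
qed

lemma EE_sub: "e \<in> EE \<Longrightarrow> \<exists>x y. e = {x,y} \<and> x \<in> VV \<and> y \<in> VV \<and> x \<noteq> y"
  using ism[THEN conjunct2, THEN conjunct1] by blast
lemma EE_VV: "e \<in> EE \<Longrightarrow> x \<in> e \<Longrightarrow> x \<in> VV" using EE_sub by blast
lemma EE_ne: assumes "{x,y} \<in> EE" shows "x \<noteq> y"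
proof
  assume "x = y"
  obtain a b where "{x,y} = {a,b}" "a \<noteq> b" using EE_sub[OF assms] by blast
  then show False using \<open>x = y\<close> by (metis insert_absorb2 insert_iff singletonD)
qed

lemma corner_E: "\<lbrakk>f \<in> F; c \<in> f\<rbrakk> \<Longrightarrow> \<exists>e e'. c = {e,e'} \<and> e \<in> EE \<and> e' \<in> EE \<and> e \<noteq> e'"
proof -
  assume f: "f \<in> F" and c: "c \<in> f"
  have "is_corner EE c" using faces[OF f, unfolded is_face_def, THEN conjunct2, THEN conjunct2, THEN conjunct1] c by blast
  then show ?thesis unfolding is_corner_def by blast
qed
lemma face_edge_E: "f \<in> F \<Longrightarrow> e \<in> face_edges f \<Longrightarrow> e \<in> EE"
  unfolding face_edges_def using corner_E by blast

lemma corner_unique: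
  assumes f: "f \<in> F" and e: "e \<in> face_edges f" and v: "v \<in> e"
    and c: "c \<in> f" "e \<in> c" "v \<in> \<Inter>c" and d: "d \<in> f" "e \<in> d" "v \<in> \<Inter>d"
  shows "c = d"
proof -
  have "card {c\<in>f. e \<in> c \<and> v \<in> \<Inter>c} = 1" using faces[OF f, unfolded is_face_def, THEN conjunct2, THEN conjunct2, THEN conjunct2, THEN conjunct1] e v by blast
  then obtain c0 where c0: "{c\<in>f. e \<in> c \<and> v \<in> \<Inter>c} = {c0}" by (meson card_1_singletonE)
  have "c \<in> {c\<in>f. e \<in> c \<and> v \<in> \<Inter>c}" "d \<in> {c\<in>f. e \<in> c \<and> v \<in> \<Inter>c}" using c d by simp_all
  then show ?thesis unfolding c0 by simp
qed

lemma corner_exists: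
  assumes f: "f \<in> F" and e: "e \<in> face_edges f" and v: "v \<in> e"
  obtains e' where "{e,e'} \<in> f" "e' \<noteq> e" "v \<in> e'"
proof -
  have "card {c\<in>f. e \<in> c \<and> v \<in> \<Inter>c} = 1" using faces[OF f, unfolded is_face_def, THEN conjunct2, THEN conjunct2, THEN conjunct2, THEN conjunct1] e v by blast
  then obtain c0 where "{c\<in>f. e \<in> c \<and> v \<in> \<Inter>c} = {c0}" by (meson card_1_singletonE)
  then have c0: "c0 \<in> f" "e \<in> c0" "v \<in> \<Inter>c0" by auto
  obtain a b where ab: "c0 = {a,b}" "a \<noteq> b" using corner_E[OF f c0(1)] by blast
  show ?thesis
  proof (cases "a = e")
    case True then show ?thesis using that[of b] ab c0 by auto
  next
    case False then have "b = e" using ab c0 by auto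
    then show ?thesis using that[of a] ab c0 by (auto simp: insert_commute)
  qed
qed

lemma two_faces:
  assumes e: "e \<in> EE"
  obtains f1 f2 where "{f\<in>F. e \<in> face_edges f} = {f1,f2}" "f1 \<noteq> f2"
  using card2[OF e] by (meson card_2_iff)

lemma GG_gaut: assumes g: "g \<in> GG" shows "gaut g" and "\<And>x. x \<notin> VV \<Longrightarrow> g x = x"
proof -
  have b: "bij_betw g VV VV" and ie: "img_edge g ` EE = EE" using g unfolding map_aut_def by auto
  show "\<And>x. x \<notin> VV \<Longrightarrow> g x = x" using g unfolding map_aut_def by auto
  have inj: "inj_on g VV" using b bij_betw_def by blast
  have gv: "\<And>x. x \<in> VV \<Longrightarrow> g x \<in> VV" using b bij_betwE by blast
  show "gaut g" unfolding gaut_def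
  proof (intro conjI b ballI)
    fix x y assume x: "x \<in> VV" and y: "y \<in> VV"
    show "adj (g x) (g y) = adj x y"
    proof
      assume "adj x y"
      then have "img_edge g {x,y} \<in> EE" using ie unfolding adj_def by blast
      then show "adj (g x) (g y)" unfolding adj_def img_edge_def by simp
    next
      assume "adj (g x) (g y)"
      then have "{g x, g y} \<in> img_edge g ` EE" using ie unfolding adj_def by simp
      then obtain e where e: "e \<in> EE" "img_edge g e = {g x, g y}" by blast
      obtain p q where pq: "e = {p,q}" "p \<in> VV" "q \<in> VV" using EE_sub[OF e(1)] by blast
      have "{g p, g q} = {g x, g y}" using e(2) pq unfolding img_edge_def by simp
      then have "{p,q} = {x,y}" using inj pq x y unfolding inj_on_def doubleton_eq_iff by metis
      then show "adj x y" using e pq unfolding adj_def by simp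
    qed
  qed
qed

lemma id_GG: "id \<in> GG"
proof -
  have e: "img_edge id = id" unfolding img_edge_def by auto
  have f: "img_face id = id" unfolding img_face_def img_edge_def by auto
  show ?thesis unfolding map_aut_def by (simp add: e f)
qed

lemma comp_GG: assumes g: "g \<in> GG" and h: "h \<in> GG" shows "g \<circ> h \<in> GG"
proof -
  have e: "img_edge (g \<circ> h) = img_edge g \<circ> img_edge h" unfolding img_edge_def by (auto simp: image_comp)
  have f: "img_face (g \<circ> h) = img_face g \<circ> img_face h" unfolding img_face_def e by (auto simp: image_comp)
  have g1: "bij_betw g VV VV" "img_edge g ` EE = EE" "img_face g ` F = F" "\<forall>x. x \<notin> VV \<longrightarrow> g x = x"
    using g unfolding map_aut_def by auto
  have h1: "bij_betw h VV VV" "img_edge h ` EE = EE" "img_face h ` F = F" "\<forall>x. x \<notin> VV \<longrightarrow> h x = x"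
    using h unfolding map_aut_def by auto
  have "img_edge (g \<circ> h) ` EE = EE" unfolding e image_comp[symmetric] using g1 h1 by simp
  moreover have "img_face (g \<circ> h) ` F = F" unfolding f image_comp[symmetric] using g1 h1 by simp
  moreover have "bij_betw (g \<circ> h) VV VV" by (rule bij_betw_trans[OF h1(1) g1(1)])
  ultimately show ?thesis unfolding map_aut_def using g1 h1 by simp
qed

definition ginv :: "(bool \<times> nat \<Rightarrow> bool \<times> nat) \<Rightarrow> bool \<times> nat \<Rightarrow> bool \<times> nat" where
  "ginv g x = (if x \<in> VV then inv_into VV g x else x)"

lemma inv_GG: assumes g: "g \<in> GG" shows "ginv g \<in> GG" and "g \<circ> ginv g = id"
proof -
  have b: "bij_betw g VV VV" and ie: "img_edge g ` EE = EE" and if': "img_face g ` F = F"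
    and out: "\<And>x. x \<notin> VV \<Longrightarrow> g x = x" using g unfolding map_aut_def by auto
  have gv: "\<And>x. x \<in> VV \<Longrightarrow> g x \<in> VV" using b bij_betwE by blast
  have l: "\<And>x. x \<in> VV \<Longrightarrow> ginv g (g x) = x" unfolding ginv_def using b gv
    by (simp add: bij_betw_inv_into_left)
  have r: "\<And>x. x \<in> VV \<Longrightarrow> g (ginv g x) = x" unfolding ginv_def using b
    by (simp add: bij_betw_inv_into_right)
  show "g \<circ> ginv g = id"
  proof
    fix x show "(g \<circ> ginv g) x = id x" using r out by (cases "x \<in> VV") (auto simp: ginv_def)
  qed
  have bi: "bij_betw (ginv g) VV VV"
  proof -
    have "bij_betw (inv_into VV g) VV VV" using b by (rule bij_betw_inv_into)
    moreover have "\<And>x. x \<in> VV \<Longrightarrow> ginv g x = inv_into VV g x" unfolding ginv_def by simp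
    ultimately show ?thesis using bij_betw_cong by blast
  qed
  have le: "img_edge (ginv g) (img_edge g e) = e" if e: "e \<in> EE" for e
  proof -
    have "e \<subseteq> VV" using EE_VV e by blast
    then show ?thesis unfolding img_edge_def using l by (force simp: image_comp)
  qed
  have lf: "img_face (ginv g) (img_face g f) = f" if f: "f \<in> F" for f
  proof -
    have "\<forall>c\<in>f. \<forall>e\<in>c. e \<in> EE" using corner_E[OF f] by blast
    then have "\<forall>c\<in>f. img_edge (ginv g) ` (img_edge g ` c) = c"
      using le by (force simp: image_comp)
    then show ?thesis unfolding img_face_def by (force simp: image_comp)
  qed
  have "img_edge (ginv g) ` EE = EE"
  proof -
    have "img_edge (ginv g) ` EE = img_edge (ginv g) ` img_edge g ` EE" using ie by simp
    also have "\<dots> = EE" using le by (force simp: image_comp)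
    finally show ?thesis .
  qed
  moreover have "img_face (ginv g) ` F = F"
  proof -
    have "img_face (ginv g) ` F = img_face (ginv g) ` img_face g ` F" using if' by simp
    also have "\<dots> = F" using lf by (force simp: image_comp)
    finally show ?thesis .
  qed
  ultimately show "ginv g \<in> GG" unfolding map_aut_def using bi by (auto simp: ginv_def)
qed

lemma img_edge_pair: "img_edge g {a,b} = {g a, g b}" unfolding img_edge_def by simp

lemma face_edges_img: "e \<in> face_edges f \<Longrightarrow> img_edge g e \<in> face_edges (img_face g f)"
  unfolding face_edges_def img_face_def by blast

lemma GG_face: "g \<in> GG \<Longrightarrow> f \<in> F \<Longrightarrow> img_face g f \<in> F" unfolding map_aut_def by blast

lemma flag0_eq: "x \<noteq> y \<Longrightarrow> flag0 (x,{x,y},f) = (y,{x,y},f)"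
  unfolding flag0_def by (auto intro: the_equality)

lemma flag1_eq:
  assumes f: "f \<in> F" and c: "{e1,e2} \<in> f" and ne: "e1 \<noteq> e2" and x: "x \<in> e1" "x \<in> e2"
  shows "flag1 (x,e1,f) = (x,e2,f)"
proof -
  have fe: "e1 \<in> face_edges f" using c unfolding face_edges_def by blast
  have "(THE e'. {e1,e'} \<in> f \<and> e' \<noteq> e1 \<and> x \<in> e') = e2"
  proof (rule the_equality)
    show "{e1,e2} \<in> f \<and> e2 \<noteq> e1 \<and> x \<in> e2" using c ne x by auto
  next
    fix e' assume h: "{e1,e'} \<in> f \<and> e' \<noteq> e1 \<and> x \<in> e'"
    have "{e1,e'} = {e1,e2}" by (rule corner_unique[OF f fe x(1)]) (use h c x in auto)
    then show "e' = e2" using h ne by (metis doubleton_eq_iff)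
  qed
  then show ?thesis unfolding flag1_def by simp
qed

lemma flag2_eq:
  assumes e: "e \<in> EE" and f: "f \<in> F" "e \<in> face_edges f" and f': "f' \<in> F" "e \<in> face_edges f'" and ne: "f \<noteq> f'"
  shows "flag2 F (x,e,f) = (x,e,f')"
proof -
  obtain f1 f2 where S: "{f\<in>F. e \<in> face_edges f} = {f1,f2}" by (rule two_faces[OF e])
  have "(THE f''. f'' \<in> F \<and> e \<in> face_edges f'' \<and> f'' \<noteq> f) = f'"
  proof (rule the_equality)
    show "f' \<in> F \<and> e \<in> face_edges f' \<and> f' \<noteq> f" using f' ne by simp
  next
    fix f'' assume h: "f'' \<in> F \<and> e \<in> face_edges f'' \<and> f'' \<noteq> f"
    have "f \<in> {f1,f2}" "f' \<in> {f1,f2}" "f'' \<in> {f1,f2}" using S f f' h by blast+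
    then show "f'' = f'" using h ne by blast
  qed
  then show ?thesis unfolding flag2_def by simp
qed

lemma some_face: assumes e: "e \<in> EE" obtains f where "f \<in> F" "e \<in> face_edges f"
proof -
  obtain f1 f2 where S: "{f\<in>F. e \<in> face_edges f} = {f1,f2}" by (rule two_faces[OF e])
  then have "f1 \<in> {f\<in>F. e \<in> face_edges f}" by simp
  then show ?thesis using that by blast
qed

lemma arc_rev: assumes e: "{x,y} \<in> EE" shows "\<exists>g\<in>GG. g x = y \<and> g y = x"
proof -
  obtain f where f: "f \<in> F" "{x,y} \<in> face_edges f" by (rule some_face[OF e])
  have ne: "x \<noteq> y" by (rule EE_ne[OF e])
  have "(x,{x,y},f) \<in> flags F" using f unfolding flags_def by simp
  from orb0[OF this] have "(y,{x,y},f) \<in> flag_orbit VV EE F (x,{x,y},f)" using flag0_eq[OF ne] by simp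
  from in_orbit[OF this] obtain g where g: "g \<in> GG" "g x = y" "img_edge g {x,y} = {x,y}" by auto
  then have "{y, g y} = {x,y}" using img_edge_pair by metis
  then have "g y = x" using ne by (metis doubleton_eq_iff)
  then show ?thesis using g by blast
qed

lemma link_edges: assumes "(e1,e2) \<in> vertex_link F v"
  obtains f where "f \<in> F" "{e1,e2} \<in> f" "e1 \<noteq> e2" "v \<in> e1" "v \<in> e2" "e1 \<in> EE" "e2 \<in> EE"
proof -
  obtain f where f: "f \<in> F" "{e1,e2} \<in> f" "e1 \<noteq> e2" "v \<in> e1" "v \<in> e2"
    using assms unfolding vertex_link_def by blast
  have "\<exists>a b. {e1,e2} = {a,b} \<and> a \<in> EE \<and> b \<in> EE \<and> a \<noteq> b" by (rule corner_E[OF f(1,2)])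
  then obtain a b where ab: "{e1,e2} = {a,b}" "a \<in> EE" "b \<in> EE" by metis
  have "e1 \<in> {a,b}" "e2 \<in> {a,b}" using ab(1) by (metis insertI1, metis insertI1 insert_commute)
  then have "e1 \<in> EE" "e2 \<in> EE" using ab by auto
  then show ?thesis using that f by blast
qed

lemma stab_trans:
  assumes x: "x \<in> VV" and e: "{x,y} \<in> EE" and e': "{x,y'} \<in> EE"
  shows "\<exists>g\<in>GG. g x = x \<and> g y = y'"
proof -
  have R: "(({x,y}, {x,y'}) \<in> (vertex_link F x)\<^sup>*)" by (rule link[OF x e e']) auto
  have "\<forall>e''. ({x,y}, e'') \<in> (vertex_link F x)\<^sup>* \<longrightarrow> (\<exists>g\<in>GG. g x = x \<and> img_edge g {x,y} = e'')"
  proof (intro allI impI)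
    fix e'' assume "({x,y}, e'') \<in> (vertex_link F x)\<^sup>*"
    then show "\<exists>g\<in>GG. g x = x \<and> img_edge g {x,y} = e''"
    proof (induction rule: rtrancl_induct)
      case base
      show ?case by (rule bexI[OF _ id_GG]) (simp add: img_edge_def)
    next
      case (step e1 e2)
      obtain g where g: "g \<in> GG" "g x = x" "img_edge g {x,y} = e1" using step.IH by blast
      obtain f where f: "f \<in> F" "{e1,e2} \<in> f" "e1 \<noteq> e2" "x \<in> e1" "x \<in> e2" by (rule link_edges[OF step.hyps(2)])
      have "(x,e1,f) \<in> flags F" using f unfolding flags_def face_edges_def by blast
      from orb1[OF this] have "(x,e2,f) \<in> flag_orbit VV EE F (x,e1,f)" using flag1_eq[OF f] by simp
      from in_orbit[OF this] obtain h where h: "h \<in> GG" "h x = x" "img_edge h e1 = e2" by auto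
      have "img_edge (h \<circ> g) {x,y} = e2" using g h unfolding img_edge_def by (auto simp: image_comp[symmetric])
      moreover have "(h \<circ> g) x = x" using g h by simp
      ultimately show ?case using comp_GG[OF h(1) g(1)] by blast
    qed
  qed
  then obtain g where g: "g \<in> GG" "g x = x" "img_edge g {x,y} = {x,y'}" using R by blast
  then have "{x, g y} = {x, y'}" using img_edge_pair by metis
  then have "g y = y'" using EE_ne[OF e'] by (metis doubleton_eq_iff)
  then show ?thesis using g by blast
qed

lemma face_fix:
  assumes g: "g \<in> GG" and e: "e \<in> EE" and x: "x \<in> e" and gx: "g x = x" and ge: "img_edge g e = e"
    and f: "f \<in> F" "e \<in> face_edges f"
  shows "img_face g f = f"
proof (rule ccontr)
  assume ne: "img_face g f \<noteq> f"
  have f': "img_face g f \<in> F" "e \<in> face_edges (img_face g f)"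
    using GG_face[OF g f(1)] face_edges_img[OF f(2), of g] ge by auto
  have fl: "(x,e,f) \<in> flags F" using f x unfolding flags_def by simp
  have "flag2 F (x,e,f) = (x,e,img_face g f)" by (rule flag2_eq[OF e f f']) (use ne in auto)
  moreover have "(x,e,img_face g f) \<in> flag_orbit VV EE F (x,e,f)"
  proof -
    have "flag_act g (x,e,f) = (x,e,img_face g f)" unfolding flag_act_def using gx ge by simp
    then show ?thesis unfolding flag_orbit_def using g by (metis image_eqI)
  qed
  ultimately show False using orb2[OF fl] by simp
qed

lemma corner_fix:
  assumes g: "g \<in> GG" and e1: "e1 \<in> EE" and x: "x \<in> e1" and gx: "g x = x" and ge: "img_edge g e1 = e1"
    and f: "f \<in> F" and c: "{e1,e2} \<in> f" and ne: "e1 \<noteq> e2" and x2: "x \<in> e2"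
  shows "img_edge g e2 = e2"
proof -
  have fe: "e1 \<in> face_edges f" using c unfolding face_edges_def by blast
  have ff: "img_face g f = f" by (rule face_fix[OF g e1 x gx ge f fe])
  have "img_edge g ` {e1,e2} \<in> img_face g f" using c unfolding img_face_def by blast
  then have c': "{e1, img_edge g e2} \<in> f" using ff ge by simp
  have x2': "x \<in> img_edge g e2" using x2 gx unfolding img_edge_def by force
  have "{e1, img_edge g e2} = {e1,e2}" by (rule corner_unique[OF f fe x]) (use c c' x x2 x2' in auto)
  then show ?thesis using ne by (metis doubleton_eq_iff)
qed

lemma local_fix:
  assumes g: "g \<in> GG" and e: "{x,y} \<in> EE" and gx: "g x = x" and gy: "g y = y" and w: "{x,w} \<in> EE"
  shows "g w = w"
proof -
  have xV: "x \<in> VV" using EE_VV[OF e] by simp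
  have R: "(({x,y}, {x,w}) \<in> (vertex_link F x)\<^sup>*)" by (rule link[OF xV e w]) auto
  have "\<forall>e''. ({x,y}, e'') \<in> (vertex_link F x)\<^sup>* \<longrightarrow> img_edge g e'' = e''"
  proof (intro allI impI)
    fix e'' assume "({x,y}, e'') \<in> (vertex_link F x)\<^sup>*"
    then show "img_edge g e'' = e''"
    proof (induction rule: rtrancl_induct)
      case base
      show ?case using gx gy img_edge_pair by metis
    next
      case (step e1 e2)
      obtain f where f: "f \<in> F" "{e1,e2} \<in> f" "e1 \<noteq> e2" "x \<in> e1" "x \<in> e2" "e1 \<in> EE" by (rule link_edges[OF step.hyps(2)])
      show ?case by (rule corner_fix[OF g f(6) f(4) gx step.IH f(1,2,3,5)])
    qed
  qed
  then have "img_edge g {x,w} = {x,w}" using R by blast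
  then have "{x, g w} = {x, w}" using gx img_edge_pair by metis
  then show ?thesis using EE_ne[OF w] by (metis doubleton_eq_iff)
qed

lemma arc_fix:
  assumes g: "g \<in> GG" and e: "{x,y} \<in> EE" and gx: "g x = x" and gy: "g y = y" and z: "z \<in> VV"
  shows "g z = z"
proof -
  define S where "S = {v \<in> VV. g v = v \<and> (\<forall>w. {v,w} \<in> EE \<longrightarrow> g w = w)}"
  have xV: "x \<in> VV" using EE_VV[OF e] by simp
  have xS: "x \<in> S" unfolding S_def using xV gx local_fix[OF g e gx gy] by blast
  have "(x, z) \<in> {(a, b). {a, b} \<in> EE}\<^sup>*" by (rule conn[OF xV z])
  then have "z \<in> S"
  proof (induction rule: rtrancl_induct)
    case base then show ?case by (rule xS)
  next
    case (step a b)
    have ab: "{a,b} \<in> EE" using step.hyps(2) by simp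
    have ga: "g a = a" using step.IH unfolding S_def by blast
    have gb: "g b = b" using step.IH ab unfolding S_def by blast
    have ba: "{b,a} \<in> EE" using ab by (simp add: insert_commute)
    have "b \<in> VV" using EE_VV[OF ab] by simp
    then show ?case unfolding S_def using gb local_fix[OF g ba gb ga] by blast
  qed
  then show ?thesis unfolding S_def by blast
qed

end


context RWM begin

definition AA :: "(int \<Rightarrow> bool) set" where "AA = {\<alpha>. perd \<alpha> \<and> nel \<alpha> \<in> GG}"

lemma AA_xor: assumes a: "\<alpha> \<in> AA" and c: "\<gamma> \<in> AA" shows "(\<lambda>m. \<alpha> m \<noteq> \<gamma> m) \<in> AA"
proof -
  have p: "perd \<alpha>" "perd \<gamma>" and g: "nel \<alpha> \<in> GG" "nel \<gamma> \<in> GG" using a c unfolding AA_def by auto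
  have "perd (\<lambda>m. \<alpha> m \<noteq> \<gamma> m)" using p unfolding perd_def by simp
  moreover have "nel (\<lambda>m. \<alpha> m \<noteq> \<gamma> m) \<in> GG" using comp_GG[OF g] nel_comp[of \<alpha> \<gamma>] by simp
  ultimately show ?thesis unfolding AA_def by simp
qed

lemma perd_minus: "perd \<alpha> \<Longrightarrow> \<alpha> (m - int n) = \<alpha> m"
  unfolding perd_def by (metis diff_add_cancel)

lemma conj_mem:
  assumes g: "g \<in> GG" and a: "\<alpha> \<in> AA" and e: "g \<circ> nel \<alpha> = nel \<alpha>' \<circ> g"
  shows "nel \<alpha>' \<in> GG"
proof -
  have "nel \<alpha>' = nel \<alpha>' \<circ> (g \<circ> ginv g)" using inv_GG(2)[OF g] by simp
  also have "\<dots> = (g \<circ> nel \<alpha>) \<circ> ginv g" using e by (simp add: comp_assoc)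
  finally have "nel \<alpha>' = g \<circ> nel \<alpha> \<circ> ginv g" by (simp add: comp_assoc)
  then show ?thesis using comp_GG g inv_GG(1)[OF g] a unfolding AA_def by auto
qed

lemma lab00: "lab 0 False False \<in> VV" "bk (lab 0 False False) = 0" "la (lab 0 False False) = False" "lb (lab 0 False False) = False"
  using n5 lab_in bk_lab la_lab lb_lab by auto

lemma nx0: "nx 0 = 1" using n5 nx_simp[of 0] by simp
lemma pv0: "pv 0 = n - 1" using n5 unfolding pv_def by simp

lemma AA_refl0: assumes a: "\<alpha> \<in> AA" shows "(\<lambda>m. \<alpha> (- m)) \<in> AA"
proof -
  let ?x = "lab 0 False False" and ?y = "lab 1 False False"
  have y: "?y \<in> VV" "bk ?y = 1" using n5 lab_in bk_lab by auto
  have e: "{?x,?y} \<in> EE" using edge_lab[of 0 False False False] n5 nx0 by simp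
  obtain g where g: "g \<in> GG" "g ?x = ?y" "g ?y = ?x" using arc_rev[OF e] by blast
  have ga: "gaut g" and out: "\<And>x. x \<notin> VV \<Longrightarrow> g x = x" using GG_gaut[OF g(1)] by auto
  have b0: "bmap g 0 = 1" unfolding bmap_def using g y by simp
  have b1: "bmap g 1 = 0" using bmap_bk[OF ga y(1)] g lab00 y by simp
  have "\<not> pres g"
  proof
    assume "pres g"
    then have "bmap g (nx 0) = nx (bmap g 0)" unfolding pres_def using n5 by simp
    then show False using b0 b1 nx0 nx_simp[of 1] n5 by simp
  qed
  then have r: "rvs g" using pres_or_rvs[OF ga] by simp
  have p: "perd \<alpha>" using a unfolding AA_def by simp
  have "g \<circ> nel \<alpha> = nel (\<lambda>m. \<alpha> (int (bmap g 0) - m - 1)) \<circ> g" by (rule conj_rvs[OF ga r out p])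
  then have "g \<circ> nel \<alpha> = nel (\<lambda>m. \<alpha> (- m)) \<circ> g" using b0 by simp
  then have "nel (\<lambda>m. \<alpha> (- m)) \<in> GG" by (rule conj_mem[OF g(1) a])
  moreover have "perd (\<lambda>m. \<alpha> (- m))" using perd_minus[OF p] unfolding perd_def by (simp add: algebra_simps)
  ultimately show ?thesis unfolding AA_def by simp
qed

lemma AA_refl1: assumes a: "\<alpha> \<in> AA" shows "(\<lambda>m. \<alpha> (- m - 1)) \<in> AA"
proof -
  let ?x = "lab 0 False False" and ?y = "lab 1 False False" and ?y' = "lab (n-1) False False"
  have y: "?y \<in> VV" "bk ?y = 1" using n5 lab_in bk_lab by auto
  have y': "?y' \<in> VV" "bk ?y' = n-1" using n5 lab_in bk_lab by auto
  have e: "{?x,?y} \<in> EE" using edge_lab[of 0 False False False] n5 nx0 by simp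
  have e': "{?x,?y'} \<in> EE" using edge_lab[of "n-1" False False False] n5 nx_last by (simp add: insert_commute)
  obtain g where g: "g \<in> GG" "g ?x = ?x" "g ?y = ?y'" using stab_trans[OF lab00(1) e e'] by blast
  have ga: "gaut g" and out: "\<And>x. x \<notin> VV \<Longrightarrow> g x = x" using GG_gaut[OF g(1)] by auto
  have b0: "bmap g 0 = 0" unfolding bmap_def using g lab00 by simp
  have b1: "bmap g 1 = n - 1" using bmap_bk[OF ga y(1)] g y y' by simp
  have "\<not> pres g"
  proof
    assume "pres g"
    then have "bmap g (nx 0) = nx (bmap g 0)" unfolding pres_def using n5 by simp
    then show False using b0 b1 nx0 n5 by simp
  qed
  then have r: "rvs g" using pres_or_rvs[OF ga] by simp
  have p: "perd \<alpha>" using a unfolding AA_def by simp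
  have "g \<circ> nel \<alpha> = nel (\<lambda>m. \<alpha> (int (bmap g 0) - m - 1)) \<circ> g" by (rule conj_rvs[OF ga r out p])
  then have "g \<circ> nel \<alpha> = nel (\<lambda>m. \<alpha> (- m - 1)) \<circ> g" using b0 by simp
  then have "nel (\<lambda>m. \<alpha> (- m - 1)) \<in> GG" by (rule conj_mem[OF g(1) a])
  moreover have "perd (\<lambda>m. \<alpha> (- m - 1))" unfolding perd_def
  proof
    fix m have "- (m + int n) - 1 = (- m - 1) - int n" by simp
    then show "\<alpha> (- (m + int n) - 1) = \<alpha> (- m - 1)" using perd_minus[OF p, of "- m - 1"] by (simp only:)
  qed
  ultimately show ?thesis unfolding AA_def by simp
qed

lemma AA_p: obtains \<beta> where "\<beta> \<in> AA" "\<not> \<beta> (-1)" "\<not> \<beta> 0" "\<beta> 1"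
proof -
  let ?x = "lab 0 False False" and ?y = "lab 1 False False" and ?y' = "lab 1 True False"
  have y: "?y \<in> VV" "bk ?y = 1" "la ?y = False" "lb ?y = False" using n5 lab_in bk_lab la_lab lb_lab by auto
  have y': "?y' \<in> VV" "bk ?y' = 1" "la ?y' = True" "lb ?y' = False" using n5 lab_in bk_lab la_lab lb_lab by auto
  have e: "{?x,?y} \<in> EE" using edge_lab[of 0 False False False] n5 nx0 by simp
  have e': "{?x,?y'} \<in> EE" using edge_lab[of 0 False False True] n5 nx0 by simp
  obtain g where g: "g \<in> GG" "g ?x = ?x" "g ?y = ?y'" using stab_trans[OF lab00(1) e e'] by blast
  have ga: "gaut g" and out: "\<And>x. x \<notin> VV \<Longrightarrow> g x = x" using GG_gaut[OF g(1)] by auto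
  have b0: "bmap g 0 = 0" unfolding bmap_def using g lab00 by simp
  have b1: "bmap g 1 = 1" using bmap_bk[OF ga y(1)] g y y' by simp
  have "\<not> rvs g"
  proof
    assume "rvs g"
    then have "bmap g (nx 0) = pv (bmap g 0)" unfolding rvs_def using n5 by simp
    then show False using b0 b1 nx0 pv0 n5 by simp
  qed
  then have pr: "pres g" using pres_or_rvs[OF ga] by simp
  define \<beta> where "\<beta> = (\<lambda>m. gA g (nat (m mod int n)))"
  have gb: "g = nel \<beta>" unfolding \<beta>_def by (rule fix_blocks_nel[OF ga pr b0 out])
  have pb: "perd \<beta>" unfolding perd_def \<beta>_def by simp
  have "nel \<beta> ?x = ?x" using g gb by simp
  then have "la (nel \<beta> ?x) = False" "lb (nel \<beta> ?x) = False" using lab00 by simp_all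
  then have h1: "\<not> \<beta> 0" "\<not> \<beta> (-1)" using nel_c[OF lab00(1), of \<beta>] lab00 by simp_all
  have "nel \<beta> ?y = ?y'" using g gb by simp
  then have "la (nel \<beta> ?y) = True" using y' by simp
  then have h2: "\<beta> 1" using nel_c[OF y(1), of \<beta>] y by simp
  show ?thesis by (rule that[of \<beta>]) (use h1 h2 g(1) gb pb in \<open>auto simp: AA_def\<close>)
qed

lemma AA_zero:
  assumes a: "\<alpha> \<in> AA" and z: "\<not> \<alpha> (k - 1)" "\<not> \<alpha> k" "\<not> \<alpha> (k + 1)"
  shows "\<alpha> m = False"
proof -
  have p: "perd \<alpha>" and g: "nel \<alpha> \<in> GG" using a unfolding AA_def by auto
  define k0 where "k0 = nat (k mod int n)"
  have k0: "k0 < n" "int k0 = k mod int n" unfolding k0_def using n5 by (auto simp: nat_less_iff)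
  let ?x = "lab k0 False False" and ?y = "lab (nx k0) False False"
  have x: "?x \<in> VV" "bk ?x = k0" "la ?x = False" "lb ?x = False" using k0 lab_in bk_lab la_lab lb_lab by auto
  have y: "?y \<in> VV" "bk ?y = nx k0" "la ?y = False" "lb ?y = False" using lab_in bk_lab la_lab lb_lab by auto
  have e: "{?x,?y} \<in> EE" using edge_lab[OF k0(1), of False False False] by simp
  have a0: "\<alpha> (int k0) = \<alpha> k" by (rule perd_cong[OF p]) (simp add: k0)
  have a1: "\<alpha> (int k0 - 1) = \<alpha> (k - 1)" by (rule perd_cong[OF p]) (simp add: k0 mod_diff_left_eq)
  have a2: "\<alpha> (int (nx k0)) = \<alpha> (k + 1)" by (rule perd_cong[OF p]) (simp add: nx_int k0 mod_add_left_eq)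
  have a3: "\<alpha> (int (nx k0) - 1) = \<alpha> k"
  proof (rule perd_cong[OF p])
    have "(int (nx k0) - 1) mod int n = (int (nx k0) mod int n - 1) mod int n" by (simp add: mod_diff_left_eq)
    also have "\<dots> = k mod int n" using nx_int[of k0] k0 by (simp add: mod_diff_left_eq)
    finally show "(int (nx k0) - 1) mod int n = k mod int n" .
  qed
  have fx: "nel \<alpha> ?x = ?x" by (rule coords_eq[OF nel_in[OF x(1)] x(1)]) (use nel_c[OF x(1)] x a0 a1 z in auto)
  have fy: "nel \<alpha> ?y = ?y" by (rule coords_eq[OF nel_in[OF y(1)] y(1)]) (use nel_c[OF y(1)] y a2 a3 z in auto)
  define m0 where "m0 = nat (m mod int n)"
  have m0: "m0 < n" "int m0 = m mod int n" unfolding m0_def using n5 by (auto simp: nat_less_iff)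
  let ?z = "lab m0 False False"
  have zz: "?z \<in> VV" "bk ?z = m0" "la ?z = False" using m0 lab_in bk_lab la_lab by auto
  have "nel \<alpha> ?z = ?z" by (rule arc_fix[OF g e fx fy zz(1)])
  then have "la (nel \<alpha> ?z) = False" using zz by simp
  then have "\<alpha> (int m0) = False" using nel_c(2)[OF zz(1)] zz by simp
  moreover have "\<alpha> (int m0) = \<alpha> m" by (rule perd_cong[OF p]) (simp add: m0)
  ultimately show ?thesis by simp
qed

end


lemma per_mult: assumes "\<And>m. f (m + (d::int)) = f m" shows "f (m + d * int q) = f m"
proof (induction q)
  case 0 then show ?case by simp
next
  case (Suc q)
  have "f (m + d * int (Suc q)) = f ((m + d * int q) + d)" by (simp add: algebra_simps)
  also have "\<dots> = f (m + d * int q)" using assms by blast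
  finally show ?case using Suc by simp
qed

lemma per_mod: assumes p: "\<And>m. f (m + (d::int)) = f m" and d: "d > 0" shows "f (m mod d) = f m"
proof (cases "m div d \<ge> 0")
  case True
  have "m = m mod d + d * int (nat (m div d))" using True by simp
  then show ?thesis using per_mult[where f=f and d=d and m="m mod d" and q="nat (m div d)", OF p] by simp
next
  case False
  have "m mod d = m + d * int (nat (- (m div d)))" using False
    by (simp add: minus_div_mult_eq_mod [symmetric] algebra_simps)
  then show ?thesis using per_mult[where f=f and d=d and m=m and q="nat (- (m div d))", OF p] by simp
qed

lemma mod3_cases: "(m::int) mod 3 = 0 \<or> m mod 3 = 1 \<or> m mod 3 = 2" by linarith
lemma mod4_cases: "(m::int) mod 4 = 0 \<or> m mod 4 = 1 \<or> m mod 4 = 2 \<or> m mod 4 = 3" by linarith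

lemma per_eq3: fixes f h :: "int \<Rightarrow> 'a" assumes "\<And>m. f (m + 3) = f m" "\<And>m. h (m + 3) = h m" "f 0 = h 0" "f 1 = h 1" "f 2 = h 2"
  shows "f = h"
proof
  fix m :: int
  have "f (m mod 3) = h (m mod 3)" using mod3_cases[of m] assms(3-5) by auto
  then show "f m = h m" using per_mod[of f 3 m] per_mod[of h 3 m] assms(1,2) by simp
qed

lemma per_eq4: fixes f h :: "int \<Rightarrow> 'a" assumes "\<And>m. f (m + 4) = f m" "\<And>m. h (m + 4) = h m" "f 0 = h 0" "f 1 = h 1" "f 2 = h 2" "f 3 = h 3"
  shows "f = h"
proof
  fix m :: int
  have "f (m mod 4) = h (m mod 4)" using mod4_cases[of m] assms(3-6) by auto
  then show "f m = h m" using per_mod[of f 4 m] per_mod[of h 4 m] assms(1,2) by simp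
qed

locale Alg =
  fixes n :: nat and A :: "(int \<Rightarrow> bool) set"
  assumes n5: "n \<ge> 5"
    and perA: "\<And>\<alpha> m. \<alpha> \<in> A \<Longrightarrow> \<alpha> (m + int n) = \<alpha> m"
    and xorA: "\<And>\<alpha> \<gamma>. \<alpha> \<in> A \<Longrightarrow> \<gamma> \<in> A \<Longrightarrow> (\<lambda>m. \<alpha> m \<noteq> \<gamma> m) \<in> A"
    and zeroA: "\<And>\<alpha> k m. \<alpha> \<in> A \<Longrightarrow> \<not> \<alpha> (k - 1) \<Longrightarrow> \<not> \<alpha> k \<Longrightarrow> \<not> \<alpha> (k + 1) \<Longrightarrow> \<alpha> m = False"
    and r0A: "\<And>\<alpha>. \<alpha> \<in> A \<Longrightarrow> (\<lambda>m. \<alpha> (- m)) \<in> A"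
    and r1A: "\<And>\<alpha>. \<alpha> \<in> A \<Longrightarrow> (\<lambda>m. \<alpha> (- m - 1)) \<in> A"
    and pA: "\<exists>\<beta>\<in>A. \<not> \<beta> (-1) \<and> \<not> \<beta> 0 \<and> \<beta> 1"
begin

lemma sh1: "\<alpha> \<in> A \<Longrightarrow> (\<lambda>m. \<alpha> (m + 1)) \<in> A"
  using r1A[OF r0A, of \<alpha>] by (simp add: algebra_simps)
lemma shm1: "\<alpha> \<in> A \<Longrightarrow> (\<lambda>m. \<alpha> (m - 1)) \<in> A"
  using r0A[OF r1A, of \<alpha>] by (simp add: algebra_simps)

lemma shnat: "\<alpha> \<in> A \<Longrightarrow> (\<lambda>m. \<alpha> (m + int k)) \<in> A \<and> (\<lambda>m. \<alpha> (m - int k)) \<in> A"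
proof (induction k)
  case 0 then show ?case by simp
next
  case (Suc k)
  then have a: "(\<lambda>m. \<alpha> (m + int k)) \<in> A" "(\<lambda>m. \<alpha> (m - int k)) \<in> A" by auto
  show ?case using sh1[OF a(1)] shm1[OF a(2)] by (simp add: algebra_simps)
qed

lemma sh: assumes "\<alpha> \<in> A" shows "(\<lambda>m. \<alpha> (m + d)) \<in> A"
proof (cases "d \<ge> 0")
  case True
  then have "d = int (nat d)" by simp
  then show ?thesis using shnat[OF assms, of "nat d"] by metis
next
  case False
  then have "d = - int (nat (- d))" by simp
  then have "(\<lambda>m. \<alpha> (m + d)) = (\<lambda>m. \<alpha> (m - int (nat (- d))))" by (metis diff_minus_eq_add minus_minus)
  then show ?thesis using shnat[OF assms, of "nat (- d)"] by simp
qed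

lemma cxor: assumes a: "\<alpha> \<in> A" and g: "\<gamma> \<in> A" shows "(\<lambda>m. \<alpha> m \<noteq> (c \<and> \<gamma> m)) \<in> A"
proof (cases c)
  case True
  then have eq: "(\<lambda>m. \<alpha> m \<noteq> (c \<and> \<gamma> m)) = (\<lambda>m. \<alpha> m \<noteq> \<gamma> m)" by simp
  show ?thesis unfolding eq by (rule xorA[OF a g])
next
  case False
  then have eq: "(\<lambda>m. \<alpha> m \<noteq> (c \<and> \<gamma> m)) = \<alpha>" by simp
  show ?thesis unfolding eq by (rule a)
qed

lemma uniq: assumes a: "\<alpha> \<in> A" and c: "\<gamma> \<in> A" and e: "\<alpha> k = \<gamma> k" "\<alpha> (k+1) = \<gamma> (k+1)" "\<alpha> (k+2) = \<gamma> (k+2)"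
  shows "\<alpha> = \<gamma>"
proof
  fix m
  have "(\<lambda>m. \<alpha> m \<noteq> \<gamma> m) m = False"
    by (rule zeroA[OF xorA[OF a c], of "k+1"]) (use e in \<open>auto simp: algebra_simps\<close>)
  then show "\<alpha> m = \<gamma> m" by simp
qed

lemma zero_in: "(\<lambda>m. False) \<in> A"
  using pA xorA by fastforce

theorem classify:
  "(A = {\<alpha>. \<forall>m. \<alpha> (m + 3) = \<alpha> m} \<and> 3 dvd n)
   \<or> (A = {\<alpha>. (\<forall>m. \<alpha> (m + 4) = \<alpha> m) \<and> \<alpha> 3 = (\<alpha> 0 \<noteq> (\<alpha> 1 \<noteq> \<alpha> 2))} \<and> 4 dvd n)"
proof -
  obtain \<beta> where b: "\<beta> \<in> A" "\<not> \<beta> (-1)" "\<not> \<beta> 0" "\<beta> 1" using pA by blast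
  define P where "P = (\<lambda>m. \<beta> (m - 1))"
  have PA: "P \<in> A" unfolding P_def using sh[OF b(1), of "-1"] by simp
  have P012: "\<not> P 0" "\<not> P 1" "P 2" unfolding P_def using b by simp_all
  have Pm1: "P (-1)"
  proof (rule ccontr)
    assume "\<not> P (-1)"
    then have "P 2 = False" using zeroA[OF PA, of 0 2] P012 by simp
    then show False using P012 by simp
  qed
  have RA: "(\<lambda>m. P (1 - m)) \<in> A"
  proof -
    have "(\<lambda>m. (\<lambda>m. P (- m)) (m + -1)) \<in> A" by (rule sh[OF r0A[OF PA]])
    then show ?thesis by (simp add: algebra_simps)
  qed
  have sym: "(\<lambda>m. P (1 - m)) = P" by (rule uniq[OF RA PA, of 0]) (use P012 Pm1 in simp_all)
  have Pm2: "P (-2) = P 3" using fun_cong[OF sym, of 3] by simp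
  define x where "x = P 3"
  define y where "y = P 4"
  let ?s = "\<lambda>m. P (m + 2)" and ?r = "\<lambda>m. P (m - 1)" and ?\<sigma> = "\<lambda>m. P (m + 1)"
  have sA: "?s \<in> A" using sh[OF PA, of 2] by simp
  have rA: "?r \<in> A" using sh[OF PA, of "-1"] by simp
  have \<sigma>A: "?\<sigma> \<in> A" using sh[OF PA, of 1] by simp
  define comb where "comb = (\<lambda>m. (?r m \<noteq> (x \<and> ?\<sigma> m)) \<noteq> ((y \<noteq> x) \<and> P m))"
  have cA: "comb \<in> A" unfolding comb_def by (rule cxor[OF cxor[OF rA \<sigma>A] PA])
  have sc: "?s = comb" by (rule uniq[OF sA cA, of 0]) (use P012 Pm1 in \<open>auto simp: comb_def x_def y_def\<close>)
  have "P 1 = comb (-1)" using fun_cong[OF sc, of "-1"] by simp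
  then have ny: "\<not> y" using P012 Pm1 Pm2 unfolding comb_def x_def by auto
  have rec: "P (m + 2) = ((P (m - 1) \<noteq> (x \<and> P (m + 1))) \<noteq> (x \<and> P m))" for m
    using fun_cong[OF sc, of m] ny unfolding comb_def by auto
  have P34: "P 3 = x" "\<not> P 4" using ny unfolding x_def y_def by auto
  show ?thesis
  proof (cases x)
    case False
    have per3: "P (m + 3) = P m" for m using rec[of "m + 1"] False by (simp add: algebra_simps)
    define cf where "cf = (\<lambda>a0 a1 a2 m. ((a0 \<and> P (m + 2)) \<noteq> (a1 \<and> P (m + 1))) \<noteq> (a2 \<and> P m))"
    have C: "cf a0 a1 a2 \<in> A" for a0 a1 a2
    proof -
      have "(\<lambda>m. ((False \<noteq> (a0 \<and> P (m + 2))) \<noteq> (a1 \<and> P (m + 1))) \<noteq> (a2 \<and> P m)) \<in> A"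
        by (rule cxor[OF cxor[OF cxor[OF zero_in sA] \<sigma>A] PA])
      then show ?thesis unfolding cf_def by simp
    qed
    have Cper: "cf a0 a1 a2 (m + 3) = cf a0 a1 a2 m" for a0 a1 a2 m
      unfolding cf_def using per3[of m] per3[of "m+1"] per3[of "m+2"] by (simp add: algebra_simps)
    have C012: "cf a0 a1 a2 0 = a0" "cf a0 a1 a2 1 = a1" "cf a0 a1 a2 2 = a2" for a0 a1 a2
      unfolding cf_def using P012 P34 False by auto
    have sub: "\<alpha> \<in> A \<Longrightarrow> \<alpha> = cf (\<alpha> 0) (\<alpha> 1) (\<alpha> 2)" for \<alpha>
      by (rule uniq[OF _ C, of _ 0]) (simp_all add: C012)
    have eqA: "A = {\<alpha>. \<forall>m. \<alpha> (m + 3) = \<alpha> m}"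
    proof
      show "A \<subseteq> {\<alpha>. \<forall>m. \<alpha> (m + 3) = \<alpha> m}"
      proof
        fix \<alpha> assume a: "\<alpha> \<in> A"
        have "\<alpha> (m + 3) = \<alpha> m" for m using Cper[of "\<alpha> 0" "\<alpha> 1" "\<alpha> 2" m] sub[OF a] by metis
        then show "\<alpha> \<in> {\<alpha>. \<forall>m. \<alpha> (m + 3) = \<alpha> m}" by simp
      qed
    next
      show "{\<alpha>. \<forall>m. \<alpha> (m + 3) = \<alpha> m} \<subseteq> A"
      proof
        fix \<gamma> :: "int \<Rightarrow> bool" assume g: "\<gamma> \<in> {\<alpha>. \<forall>m. \<alpha> (m + 3) = \<alpha> m}"
        have "\<gamma> = cf (\<gamma> 0) (\<gamma> 1) (\<gamma> 2)"
          by (rule per_eq3) (use g Cper C012 in auto)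
        then show "\<gamma> \<in> A" using C by metis
      qed
    qed
    have "3 dvd n"
    proof (rule ccontr)
      assume nd: "\<not> 3 dvd n"
      have pm: "P z = P (z mod 3)" for z using per_mod[of P 3 z] per3 by simp
      have i: "int n mod 3 = int (n mod 3)" by (simp add: zmod_int)
      have "n mod 3 = 1 \<or> n mod 3 = 2" using nd by presburger
      moreover have "P (int n) = P 0" using perA[OF PA, of 0] by simp
      moreover have "P (1 + int n) = P 1" using perA[OF PA, of 1] by (simp add: add.commute)
      moreover have "(1 + int n) mod 3 = (1 + int n mod 3) mod 3" by (simp add: mod_simps)
      ultimately show False using pm[of "int n"] pm[of "1 + int n"] i P012 by auto
    qed
    then show ?thesis using eqA by simp
  next
    case True
    have Q: "P (m + 3) = ((P m \<noteq> P (m + 2)) \<noteq> P (m + 1))" for m using rec[of "m + 1"] True by (simp add: algebra_simps)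
    have per4: "P (m + 4) = P m" for m
    proof -
      have "P (m + 4) = ((P (m + 1) \<noteq> P (m + 3)) \<noteq> P (m + 2))" using Q[of "m + 1"] by (simp add: algebra_simps)
      then show ?thesis using Q[of m] by auto
    qed
    define cf where "cf = (\<lambda>a0 a1 a2 m. ((a0 \<and> P (m + 2)) \<noteq> ((a0 \<noteq> a1) \<and> P (m + 1))) \<noteq> ((a0 \<noteq> (a1 \<noteq> a2)) \<and> P m))"
    have C: "cf a0 a1 a2 \<in> A" for a0 a1 a2
    proof -
      have "(\<lambda>m. ((False \<noteq> (a0 \<and> P (m + 2))) \<noteq> ((a0 \<noteq> a1) \<and> P (m + 1))) \<noteq> ((a0 \<noteq> (a1 \<noteq> a2)) \<and> P m)) \<in> A"
        by (rule cxor[OF cxor[OF cxor[OF zero_in sA] \<sigma>A] PA])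
      then show ?thesis unfolding cf_def by simp
    qed
    have Cper: "cf a0 a1 a2 (m + 4) = cf a0 a1 a2 m" for a0 a1 a2 m
      unfolding cf_def using per4[of m] per4[of "m+1"] per4[of "m+2"] by (simp add: algebra_simps)
    have P3: "P 3" using P34 True by simp
    have C012: "cf a0 a1 a2 0 = a0" "cf a0 a1 a2 1 = a1" "cf a0 a1 a2 2 = a2" "cf a0 a1 a2 3 = (a0 \<noteq> (a1 \<noteq> a2))" for a0 a1 a2
    proof -
      have P5: "P 5 = P 1" using per4[of 1] by simp
      show "cf a0 a1 a2 0 = a0" "cf a0 a1 a2 1 = a1" "cf a0 a1 a2 2 = a2" "cf a0 a1 a2 3 = (a0 \<noteq> (a1 \<noteq> a2))"
        unfolding cf_def using P012 P34 P3 P5 by auto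
    qed
    have sub: "\<alpha> \<in> A \<Longrightarrow> \<alpha> = cf (\<alpha> 0) (\<alpha> 1) (\<alpha> 2)" for \<alpha>
      by (rule uniq[OF _ C, of _ 0]) (simp_all add: C012)
    have eqA: "A = {\<alpha>. (\<forall>m. \<alpha> (m + 4) = \<alpha> m) \<and> \<alpha> 3 = (\<alpha> 0 \<noteq> (\<alpha> 1 \<noteq> \<alpha> 2))}"
    proof
      show "A \<subseteq> {\<alpha>. (\<forall>m. \<alpha> (m + 4) = \<alpha> m) \<and> \<alpha> 3 = (\<alpha> 0 \<noteq> (\<alpha> 1 \<noteq> \<alpha> 2))}"
      proof
        fix \<alpha> assume a: "\<alpha> \<in> A"
        have "\<alpha> (m + 4) = \<alpha> m" for m using Cper[of "\<alpha> 0" "\<alpha> 1" "\<alpha> 2" m] sub[OF a] by metis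
        moreover have "\<alpha> 3 = (\<alpha> 0 \<noteq> (\<alpha> 1 \<noteq> \<alpha> 2))" using C012(4)[of "\<alpha> 0" "\<alpha> 1" "\<alpha> 2"] sub[OF a] by metis
        ultimately show "\<alpha> \<in> {\<alpha>. (\<forall>m. \<alpha> (m + 4) = \<alpha> m) \<and> \<alpha> 3 = (\<alpha> 0 \<noteq> (\<alpha> 1 \<noteq> \<alpha> 2))}" by simp
      qed
    next
      show "{\<alpha>. (\<forall>m. \<alpha> (m + 4) = \<alpha> m) \<and> \<alpha> 3 = (\<alpha> 0 \<noteq> (\<alpha> 1 \<noteq> \<alpha> 2))} \<subseteq> A"
      proof
        fix \<gamma> :: "int \<Rightarrow> bool" assume g: "\<gamma> \<in> {\<alpha>. (\<forall>m. \<alpha> (m + 4) = \<alpha> m) \<and> \<alpha> 3 = (\<alpha> 0 \<noteq> (\<alpha> 1 \<noteq> \<alpha> 2))}"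
        have "\<gamma> = cf (\<gamma> 0) (\<gamma> 1) (\<gamma> 2)"
          by (rule per_eq4) (use g Cper C012 in auto)
        then show "\<gamma> \<in> A" using C by metis
      qed
    qed
    have "4 dvd n"
    proof (rule ccontr)
      assume nd: "\<not> 4 dvd n"
      have pm: "P z = P (z mod 4)" for z using per_mod[of P 4 z] per4 by simp
      have i: "int n mod 4 = int (n mod 4)" by (simp add: zmod_int)
      have "n mod 4 = 1 \<or> n mod 4 = 2 \<or> n mod 4 = 3" using nd by presburger
      moreover have "P (int n) = P 0" using perA[OF PA, of 0] by simp
      moreover have "P (1 + int n) = P 1" using perA[OF PA, of 1] by (simp add: add.commute)
      moreover have "(1 + int n) mod 4 = (1 + int n mod 4) mod 4" by (simp add: mod_simps)
      ultimately show False using pm[of "int n"] pm[of "1 + int n"] i P012 P3 by auto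
    qed
    then show ?thesis using eqA by simp
  qed
qed

end


context RW begin

lemma lab_eq_iff: assumes i: "i < n" shows "lab i a b = lab i a' b' \<longleftrightarrow> a = a' \<and> b = b'"
proof
  assume h: "lab i a b = lab i a' b'"
  have "la (lab i a b) = la (lab i a' b')" "lb (lab i a b) = lb (lab i a' b')" using h by simp_all
  then show "a = a' \<and> b = b'" using la_lab[OF i] lb_lab[OF i] by simp
qed simp

lemma UVWZ: "U n i = lab i False False" "Vv n i = lab i True False" "W n i = lab i False True" "Z n i = lab i True True"
  unfolding lab_def by simp_all

definition bit0 :: "nat \<Rightarrow> bool" where "bit0 c \<longleftrightarrow> c = 1 \<or> c = 3"
definition bit1 :: "nat \<Rightarrow> bool" where "bit1 c \<longleftrightarrow> c = 2 \<or> c = 3"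

lemma blk_act_lab: assumes i: "i < n" shows "blk_act n i c (lab i a b) = lab i (a \<noteq> bit0 c) (b \<noteq> bit1 c)"
  unfolding blk_act_def UVWZ bit0_def bit1_def
  by (cases a; cases b) (auto simp: transpose_def lab_eq_iff[OF i])

lemma blk_act_eq:
  assumes i: "i < n"
  shows "blk_act n i c x = (if x \<in> VV \<and> bk x = i then lab i (la x \<noteq> bit0 c) (lb x \<noteq> bit1 c) else x)"
proof (cases "x \<in> VV \<and> bk x = i")
  case True
  then have x: "x = lab i (la x) (lb x)" using lab_coords by metis
  have "blk_act n i c x = lab i (la x \<noteq> bit0 c) (lb x \<noteq> bit1 c)"
    using blk_act_lab[OF i, of c "la x" "lb x"] x by simp
  then show ?thesis using True by simp
next
  case False
  then have ne: "x \<noteq> lab i a b" for a b using lab_in[OF i] bk_lab[OF i] by metis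
  show ?thesis using False unfolding blk_act_def UVWZ by (auto simp: transpose_def ne)
qed

lemma foldr_comp: "foldr (\<circ>) xs g = foldr (\<circ>) xs id \<circ> g"
  by (induction xs) (auto simp: comp_assoc)

lemma elt_pre:
  "m \<le> n \<Longrightarrow> foldr (\<circ>) (map (\<lambda>i. blk_act n i (j i)) [0..<m]) id x
     = (if x \<in> VV \<and> bk x < m then lab (bk x) (la x \<noteq> bit0 (j (bk x))) (lb x \<noteq> bit1 (j (bk x))) else x)"
proof (induction m arbitrary: x)
  case 0 then show ?case by simp
next
  case (Suc m)
  have m: "m < n" using Suc.prems by simp
  have "foldr (\<circ>) (map (\<lambda>i. blk_act n i (j i)) [0..<Suc m]) id x
        = foldr (\<circ>) (map (\<lambda>i. blk_act n i (j i)) [0..<m]) id (blk_act n m (j m) x)"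
    using foldr_comp[of "map (\<lambda>i. blk_act n i (j i)) [0..<m]" "blk_act n m (j m)"] by simp
  also have "\<dots> = (if x \<in> VV \<and> bk x < Suc m then lab (bk x) (la x \<noteq> bit0 (j (bk x))) (lb x \<noteq> bit1 (j (bk x))) else x)"
  proof (cases "x \<in> VV \<and> bk x = m")
    case True
    have e: "blk_act n m (j m) x = lab m (la x \<noteq> bit0 (j m)) (lb x \<noteq> bit1 (j m))" using blk_act_eq[OF m] True by simp
    show ?thesis unfolding e Suc.IH[OF Suc_leD[OF Suc.prems]] using True m lab_in bk_lab by simp
  next
    case False
    have e: "blk_act n m (j m) x = x" unfolding blk_act_eq[OF m] using False by (rule if_not_P)
    have "(x \<in> VV \<and> bk x < m) = (x \<in> VV \<and> bk x < Suc m)" using False by auto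
    then show ?thesis unfolding e Suc.IH[OF Suc_leD[OF Suc.prems]] by simp
  qed
  finally show ?case .
qed

lemma elt_nel:
  assumes h: "\<And>k. k < n \<Longrightarrow> bit0 (j k) = \<alpha> (int k) \<and> bit1 (j k) = \<alpha> (int k - 1)"
  shows "elt n j = nel \<alpha>"
proof
  fix x
  show "elt n j x = nel \<alpha> x"
    unfolding elt_def elt_pre[OF order_refl] nel_def using h bk_lt by auto
qed

lemma sigma_nel: assumes i: "i < n" shows "sigma n i = nel (\<lambda>m. m mod int n = int i)"
proof -
  have s: "sigma n i = blk_act n i 1 \<circ> blk_act n (nx i) 2"
    unfolding sigma_def blk_act_def nx_def by (simp add: comp_assoc)
  show ?thesis
  proof
    fix x
    show "sigma n i x = nel (\<lambda>m. m mod int n = int i) x"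
    proof (cases "x \<in> VV")
      case x: True
      let ?k = "bk x"
      have k: "?k < n" using bk_lt[OF x] .
      have ni: "nx i \<noteq> i" using nx_neq[OF i] .
      have a1: "(int ?k mod int n = int i) = (?k = i)" using k i by (simp add: zmod_int)
      have a2: "((int ?k - 1) mod int n = int i) = (?k = nx i)"
      proof -
        have "(int ?k - 1) mod int n = int (pv ?k)" using pv_int[of ?k] pv_lt[of ?k] by (simp add: zmod_int)
        then show ?thesis using k i nx_pv pv_nx by (metis of_nat_eq_iff)
      qed
      show ?thesis unfolding s comp_def nel_def
        using x k a1 a2 ni blk_act_eq[OF i] blk_act_eq[OF nx_lt] lab_in bk_lab la_lab lb_lab lab_coords[OF x]
        by (auto simp: bit0_def bit1_def)
    next
      case False
      then show ?thesis unfolding s comp_def nel_def using blk_act_eq[OF i] blk_act_eq[OF nx_lt] by simp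
    qed
  qed
qed

end


context RW begin

lemma perd_delta: "perd (\<lambda>m. m mod int n = int i)" unfolding perd_def by simp

lemma Ngrp_nel: "t \<in> Ngrp n \<Longrightarrow> \<exists>\<alpha>. perd \<alpha> \<and> t = nel \<alpha>"
proof (induction rule: Ngrp.induct)
  case Ngrp_id
  show ?case by (rule exI[of _ "\<lambda>m. False"]) (simp add: perd_def nel_zero)
next
  case (Ngrp_step t i)
  obtain \<alpha> where a: "perd \<alpha>" "t = nel \<alpha>" using Ngrp_step.IH by blast
  have "sigma n i \<circ> t = nel (\<lambda>m. (m mod int n = int i) \<noteq> \<alpha> m)"
    unfolding a(2) sigma_nel[OF Ngrp_step.hyps(2)] nel_comp by simp
  moreover have "perd (\<lambda>m. (m mod int n = int i) \<noteq> \<alpha> m)" using a(1) unfolding perd_def by simp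
  ultimately show ?case by blast
qed

lemma nel_Ngrp: assumes p: "perd \<alpha>" shows "nel \<alpha> \<in> Ngrp n"
proof -
  define am where "am k = (\<lambda>z. \<alpha> z \<and> nat (z mod int n) < k)" for k
  have "k \<le> n \<Longrightarrow> nel (am k) \<in> Ngrp n" for k
  proof (induction k)
    case 0
    have e: "am 0 = (\<lambda>z. False)" unfolding am_def by simp
    show ?case unfolding e nel_zero by (rule Ngrp.Ngrp_id)
  next
    case (Suc k)
    have k: "k < n" using Suc.prems by simp
    have IH: "nel (am k) \<in> Ngrp n" using Suc by simp
    have zk: "\<alpha> z = \<alpha> (int k)" if "z mod int n = int k" for z
      using perd_cong[OF p, of z "int k"] that k by (simp add: zmod_int)
    have nn: "z mod int n = int k \<longleftrightarrow> nat (z mod int n) = k" for z using n5 by auto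
    show ?case
    proof (cases "\<alpha> (int k)")
      case True
      have "am (Suc k) = (\<lambda>z. (z mod int n = int k) \<noteq> am k z)"
        unfolding am_def using True zk nn by (auto simp: less_Suc_eq)
      then have eqn: "nel (am (Suc k)) = sigma n k \<circ> nel (am k)" using sigma_nel[OF k] nel_comp by simp
      show ?thesis unfolding eqn by (rule Ngrp.Ngrp_step[OF IH k])
    next
      case False
      have "am (Suc k) = am k" unfolding am_def using False zk nn by (auto simp: less_Suc_eq)
      then show ?thesis using IH by simp
    qed
  qed
  moreover have "am n = \<alpha>" unfolding am_def using n5 by (auto simp: nat_less_iff)
  ultimately show ?thesis by force
qed

lemma Ngrp_eq: "Ngrp n = nel ` {\<alpha>. perd \<alpha>}"
  using Ngrp_nel nel_Ngrp by blast

definition code :: "bool \<Rightarrow> bool \<Rightarrow> nat" where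
  "code a b = (if a then (if b then 3 else 1) else (if b then 2 else 0))"
lemma bits_code: "bit0 (code a b) = a" "bit1 (code a b) = b"
  unfolding code_def bit0_def bit1_def by auto

lemma elt_perL:
  assumes per: "\<And>m. \<alpha> (m + int d) = \<alpha> m" and d: "length L = d" "d > 0"
    and h: "\<And>r. r < d \<Longrightarrow> bit0 (L ! r) = \<alpha> (int r) \<and> bit1 (L ! r) = \<alpha> (int r - 1)"
  shows "elt n (per L) = nel \<alpha>"
proof (rule elt_nel)
  fix k assume k: "k < n"
  have pm: "\<alpha> z = \<alpha> (z mod int d)" for z using per_mod[of \<alpha> "int d" z] per d by simp
  have r: "k mod d < d" using d by simp
  have e1: "\<alpha> (int k) = \<alpha> (int (k mod d))" using pm[of "int k"] pm[of "int (k mod d)"] by (simp add: zmod_int)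
  have e2: "\<alpha> (int k - 1) = \<alpha> (int (k mod d) - 1)"
    using pm[of "int k - 1"] pm[of "int (k mod d) - 1"] by (simp add: zmod_int mod_diff_left_eq)
  show "bit0 (per L k) = \<alpha> (int k) \<and> bit1 (per L k) = \<alpha> (int k - 1)"
    unfolding per_def using h[OF r] e1 e2 d by simp
qed

definition per3 :: "bool \<Rightarrow> bool \<Rightarrow> bool \<Rightarrow> nat \<Rightarrow> nat" where
  "per3 a0 a1 a2 = per [code a0 a2, code a1 a0, code a2 a1]"
definition al3 :: "bool \<Rightarrow> bool \<Rightarrow> bool \<Rightarrow> int \<Rightarrow> bool" where
  "al3 a0 a1 a2 = (\<lambda>m. [a0, a1, a2] ! nat (m mod 3))"

lemma al3_per: "al3 a0 a1 a2 (m + 3) = al3 a0 a1 a2 m" unfolding al3_def by simp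
lemma al3_012: "al3 a0 a1 a2 0 = a0" "al3 a0 a1 a2 1 = a1" "al3 a0 a1 a2 2 = a2" "al3 a0 a1 a2 (-1) = a2"
  unfolding al3_def by simp_all

lemma elt_per3: "elt n (per3 a0 a1 a2) = nel (al3 a0 a1 a2)"
  unfolding per3_def
proof (rule elt_perL[where d=3])
  show "al3 a0 a1 a2 (m + int 3) = al3 a0 a1 a2 m" for m using al3_per by simp
next
  fix r :: nat assume "r < 3"
  then have "r = 0 \<or> r = 1 \<or> r = 2" by auto
  then show "bit0 ([code a0 a2, code a1 a0, code a2 a1] ! r) = al3 a0 a1 a2 (int r) \<and>
        bit1 ([code a0 a2, code a1 a0, code a2 a1] ! r) = al3 a0 a1 a2 (int r - 1)"
    using al3_012 bits_code by auto
qed simp_all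

lemma al3_eq: assumes "\<And>m. \<alpha> (m + 3) = \<alpha> m" shows "\<alpha> = al3 (\<alpha> 0) (\<alpha> 1) (\<alpha> 2)"
  by (rule per_eq3) (use assms al3_per al3_012 in auto)

lemma per_const: "per [c] = per [c, c, c]" "per [c] = per [c, c, c, c]"
proof -
  show "per [c] = per [c, c, c]"
  proof fix i :: nat
    have "i mod 3 = 0 \<or> i mod 3 = 1 \<or> i mod 3 = 2" by auto
    then show "per [c] i = per [c, c, c] i" unfolding per_def by (elim disjE) simp_all
  qed
  show "per [c] = per [c, c, c, c]"
  proof fix i :: nat
    have "i mod 4 = 0 \<or> i mod 4 = 1 \<or> i mod 4 = 2 \<or> i mod 4 = 3" by auto
    then show "per [c] i = per [c, c, c, c] i" unfolding per_def by (elim disjE) simp_all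
  qed
qed

lemma per_two: "per [a, b] = per [a, b, a, b]"
proof fix i :: nat
  have e: "per [a, b] i = [a, b] ! (i mod 2)" unfolding per_def by (simp add: numeral_2_eq_2)
  have "i mod 4 = 0 \<or> i mod 4 = 1 \<or> i mod 4 = 2 \<or> i mod 4 = 3" by auto
  moreover have "i mod 2 = (i mod 4) mod 2" by (simp add: mod_mod_cancel)
  ultimately show "per [a, b] i = per [a, b, a, b] i" unfolding e unfolding per_def by (elim disjE) simp_all
qed

lemma T3_eq: "T3 = {per3 a0 a1 a2 | a0 a1 a2. True}"
proof -
  have "T3 = {per3 False False False, per3 False True False, per3 False False True, per3 True False False,
              per3 False True True, per3 True False True, per3 True True False, per3 True True True}"
    unfolding T3_def per3_def code_def using per_const(1)[of 0] per_const(1)[of 3] by simp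
  also have "\<dots> = {per3 a0 a1 a2 | a0 a1 a2. True}"
  proof
    show "{per3 a0 a1 a2 | a0 a1 a2. True} \<subseteq> {per3 False False False, per3 False True False, per3 False False True, per3 True False False,
              per3 False True True, per3 True False True, per3 True True False, per3 True True True}"
    proof
      fix t assume "t \<in> {per3 a0 a1 a2 | a0 a1 a2. True}"
      then obtain a0 a1 a2 where "t = per3 a0 a1 a2" by blast
      then show "t \<in> {per3 False False False, per3 False True False, per3 False False True, per3 True False False,
              per3 False True True, per3 True False True, per3 True True False, per3 True True True}"
        by (cases a0; cases a1; cases a2) auto
    qed
  qed blast
  finally show ?thesis .
qed

lemma T3_char: "elt n ` T3 = nel ` {\<alpha>. \<forall>m. \<alpha> (m + 3) = \<alpha> m}"
proof
  show "elt n ` T3 \<subseteq> nel ` {\<alpha>. \<forall>m. \<alpha> (m + 3) = \<alpha> m}"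
    unfolding T3_eq using elt_per3 al3_per by blast
next
  show "nel ` {\<alpha>. \<forall>m. \<alpha> (m + 3) = \<alpha> m} \<subseteq> elt n ` T3"
  proof
    fix t assume "t \<in> nel ` {\<alpha>. \<forall>m. \<alpha> (m + 3) = \<alpha> m}"
    then obtain \<alpha> where a: "\<forall>m. \<alpha> (m + 3) = \<alpha> m" "t = nel \<alpha>" by blast
    then have "t = elt n (per3 (\<alpha> 0) (\<alpha> 1) (\<alpha> 2))" using elt_per3 al3_eq by metis
    then show "t \<in> elt n ` T3" unfolding T3_eq by blast
  qed
qed

definition per4 :: "bool \<Rightarrow> bool \<Rightarrow> bool \<Rightarrow> nat \<Rightarrow> nat" where
  "per4 a0 a1 a2 = per [code a0 (a0 \<noteq> (a1 \<noteq> a2)), code a1 a0, code a2 a1, code (a0 \<noteq> (a1 \<noteq> a2)) a2]"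
definition al4 :: "bool \<Rightarrow> bool \<Rightarrow> bool \<Rightarrow> int \<Rightarrow> bool" where
  "al4 a0 a1 a2 = (\<lambda>m. [a0, a1, a2, a0 \<noteq> (a1 \<noteq> a2)] ! nat (m mod 4))"

lemma al4_per: "al4 a0 a1 a2 (m + 4) = al4 a0 a1 a2 m" unfolding al4_def by simp
lemma al4_012: "al4 a0 a1 a2 0 = a0" "al4 a0 a1 a2 1 = a1" "al4 a0 a1 a2 2 = a2" "al4 a0 a1 a2 3 = (a0 \<noteq> (a1 \<noteq> a2))"
   "al4 a0 a1 a2 (-1) = (a0 \<noteq> (a1 \<noteq> a2))"
  unfolding al4_def by simp_all

lemma elt_per4: "elt n (per4 a0 a1 a2) = nel (al4 a0 a1 a2)"
  unfolding per4_def
proof (rule elt_perL[where d=4])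
  show "al4 a0 a1 a2 (m + int 4) = al4 a0 a1 a2 m" for m using al4_per by simp
next
  fix r :: nat assume "r < 4"
  then have "r = 0 \<or> r = 1 \<or> r = 2 \<or> r = 3" by auto
  then show "bit0 ([code a0 (a0 \<noteq> (a1 \<noteq> a2)), code a1 a0, code a2 a1, code (a0 \<noteq> (a1 \<noteq> a2)) a2] ! r) = al4 a0 a1 a2 (int r) \<and>
        bit1 ([code a0 (a0 \<noteq> (a1 \<noteq> a2)), code a1 a0, code a2 a1, code (a0 \<noteq> (a1 \<noteq> a2)) a2] ! r) = al4 a0 a1 a2 (int r - 1)"
    using al4_012 bits_code by auto
qed simp_all

lemma al4_eq: assumes "\<And>m. \<alpha> (m + 4) = \<alpha> m" "\<alpha> 3 = (\<alpha> 0 \<noteq> (\<alpha> 1 \<noteq> \<alpha> 2))"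
  shows "\<alpha> = al4 (\<alpha> 0) (\<alpha> 1) (\<alpha> 2)"
  by (rule per_eq4) (use assms al4_per al4_012 in auto)

lemma T4_eq: "T4 = {per4 a0 a1 a2 | a0 a1 a2. True}"
proof -
  have "T4 = {per4 False False False, per4 False True True, per4 False False True, per4 True False False,
              per4 True True False, per4 False True False, per4 True False True, per4 True True True}"
    unfolding T4_def per4_def code_def using per_const(2)[of 0] per_const(2)[of 3] per_two[of 2 1] per_two[of 1 2] by simp
  also have "\<dots> = {per4 a0 a1 a2 | a0 a1 a2. True}"
  proof
    show "{per4 a0 a1 a2 | a0 a1 a2. True} \<subseteq> {per4 False False False, per4 False True True, per4 False False True, per4 True False False,
              per4 True True False, per4 False True False, per4 True False True, per4 True True True}"
    proof
      fix t assume "t \<in> {per4 a0 a1 a2 | a0 a1 a2. True}"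
      then obtain a0 a1 a2 where "t = per4 a0 a1 a2" by blast
      then show "t \<in> {per4 False False False, per4 False True True, per4 False False True, per4 True False False,
              per4 True True False, per4 False True False, per4 True False True, per4 True True True}"
        by (cases a0; cases a1; cases a2) auto
    qed
  qed blast
  finally show ?thesis .
qed

lemma T4_char: "elt n ` T4 = nel ` {\<alpha>. (\<forall>m. \<alpha> (m + 4) = \<alpha> m) \<and> \<alpha> 3 = (\<alpha> 0 \<noteq> (\<alpha> 1 \<noteq> \<alpha> 2))}"
proof
  show "elt n ` T4 \<subseteq> nel ` {\<alpha>. (\<forall>m. \<alpha> (m + 4) = \<alpha> m) \<and> \<alpha> 3 = (\<alpha> 0 \<noteq> (\<alpha> 1 \<noteq> \<alpha> 2))}"
  proof
    fix t assume "t \<in> elt n ` T4"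
    then obtain a0 a1 a2 where t: "t = elt n (per4 a0 a1 a2)" unfolding T4_eq by blast
    have "al4 a0 a1 a2 \<in> {\<alpha>. (\<forall>m. \<alpha> (m + 4) = \<alpha> m) \<and> \<alpha> 3 = (\<alpha> 0 \<noteq> (\<alpha> 1 \<noteq> \<alpha> 2))}"
      using al4_per al4_012 by simp
    then show "t \<in> nel ` {\<alpha>. (\<forall>m. \<alpha> (m + 4) = \<alpha> m) \<and> \<alpha> 3 = (\<alpha> 0 \<noteq> (\<alpha> 1 \<noteq> \<alpha> 2))}"
      unfolding t elt_per4 by blast
  qed
next
  show "nel ` {\<alpha>. (\<forall>m. \<alpha> (m + 4) = \<alpha> m) \<and> \<alpha> 3 = (\<alpha> 0 \<noteq> (\<alpha> 1 \<noteq> \<alpha> 2))} \<subseteq> elt n ` T4"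
  proof
    fix t assume "t \<in> nel ` {\<alpha>. (\<forall>m. \<alpha> (m + 4) = \<alpha> m) \<and> \<alpha> 3 = (\<alpha> 0 \<noteq> (\<alpha> 1 \<noteq> \<alpha> 2))}"
    then obtain \<alpha> where a: "\<forall>m. \<alpha> (m + 4) = \<alpha> m" "\<alpha> 3 = (\<alpha> 0 \<noteq> (\<alpha> 1 \<noteq> \<alpha> 2))" "t = nel \<alpha>" by blast
    then have "t = elt n (per4 (\<alpha> 0) (\<alpha> 1) (\<alpha> 2))" using elt_per4 al4_eq by metis
    then show "t \<in> elt n ` T4" unfolding T4_eq by blast
  qed
qed

end


context RWM begin

lemma NG_eq: "Ngrp n \<inter> GG = nel ` AA"
  unfolding Ngrp_eq AA_def by blast

lemma Alg_inst: "Alg n AA"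
proof (unfold_locales)
  show "n \<ge> 5" by (rule n5)
  show "\<alpha> (m + int n) = \<alpha> m" if "\<alpha> \<in> AA" for \<alpha> m using that unfolding AA_def perd_def by blast
  show "(\<lambda>m. \<alpha> m \<noteq> \<gamma> m) \<in> AA" if "\<alpha> \<in> AA" "\<gamma> \<in> AA" for \<alpha> \<gamma> using AA_xor that by blast
  show "\<alpha> m = False" if "\<alpha> \<in> AA" "\<not> \<alpha> (k - 1)" "\<not> \<alpha> k" "\<not> \<alpha> (k + 1)" for \<alpha> k m
    using AA_zero that by blast
  show "(\<lambda>m. \<alpha> (- m)) \<in> AA" if "\<alpha> \<in> AA" for \<alpha> using AA_refl0 that by blast
  show "(\<lambda>m. \<alpha> (- m - 1)) \<in> AA" if "\<alpha> \<in> AA" for \<alpha> using AA_refl1 that by blast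
  show "\<exists>\<beta>\<in>AA. \<not> \<beta> (-1) \<and> \<not> \<beta> 0 \<and> \<beta> 1" using AA_p by metis
qed

lemma main:
  "(Ngrp n \<inter> GG = elt n ` T3 \<and> 3 dvd n) \<or> (Ngrp n \<inter> GG = elt n ` T4 \<and> 4 dvd n)"
  using Alg.classify[OF Alg_inst] NG_eq T3_char T4_char by auto

end

theorem lemma3p4:
  fixes n :: nat and F :: "(bool \<times> nat) set set set set"
  assumes "n \<ge> 5"
    and "class_2_01 (rw_verts (2 * n)) (rw_edges (2 * n) (n + 2) (n + 1)) F"
  shows "((Ngrp n \<inter> map_aut (rw_verts (2 * n)) (rw_edges (2 * n) (n + 2) (n + 1)) F
             = elt n ` T3 \<and> 3 dvd n)
         \<or> (Ngrp n \<inter> map_aut (rw_verts (2 * n)) (rw_edges (2 * n) (n + 2) (n + 1)) F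
             = elt n ` T4 \<and> 4 dvd n))
         \<and> gcd n 12 \<noteq> 1"
proof -
  interpret RWM n F using assms by (simp add: RWM_def RW_def RWM_axioms_def)
  have m: "(Ngrp n \<inter> GG = elt n ` T3 \<and> 3 dvd n) \<or> (Ngrp n \<inter> GG = elt n ` T4 \<and> 4 dvd n)" by (rule main)
  have "gcd n 12 \<noteq> 1"
  proof
    assume g: "gcd n 12 = 1"
    have "3 dvd n \<or> 4 dvd n" using m by blast
    moreover have "(3::nat) dvd 12" "(4::nat) dvd 12" by simp_all
    ultimately have "3 dvd gcd n 12 \<or> 4 dvd gcd n 12" by (meson gcd_greatest)
    then show False using g by auto
  qed
  then show ?thesis using m by simp
qed


end
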